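(* For all (possibly partial) Boolean functions $f$ and $g$, $\lambda(f\circ g)=\lambda(f)\lambda(g)$.
   Context: For a partial function $h$ with domain $\mathrm{Dom}(h)\subseteq\{0,1\}^k$, the sensitivity graph $G_h$ has vertex set $\mathrm{Dom}(h)$ and an edge between $x,y$ iff they differ in exactly one coordinate and $h(x)\ne h(y)$; $\lambda(h)$ is the spectral norm of its adjacency matrix. If $f$ has $n$ input bits and $g$ has $m$, then $f\circ g$ is the partial function on $\{0,1\}^{nm}$, with input written $x=x^{(1)}\cdots x^{(n)}$, $x^{(i)}\in\{0,1\}^m$, defined on those $x$ with each $x^{(i)}\in\mathrm{Dom}(g)$ and $(g(x^{(1)}),\dots,g(x^{(n)}))\in\mathrm{Dom}(f)$, by $(f\circ g)(x)=f(g(x^{(1)}),\dots,g(x^{(n)}))$. *)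

theory Defs
  imports Complex_Main
begin

text \<open>A partial Boolean function on k input bits is modelled as
  h :: bool list => bool option together with the arity k;
  its domain consists of the bit strings of length k on which h is defined.\<close>

type_synonym pbf = "bool list \<Rightarrow> bool option"

definition pdom :: "nat \<Rightarrow> pbf \<Rightarrow> bool list set" where
  "pdom k h = {x. length x = k \<and> h x \<noteq> None}"

definition hdist1 :: "bool list \<Rightarrow> bool list \<Rightarrow> bool" where
  "hdist1 x y \<longleftrightarrow> length x = length y \<and> card {i. i < length x \<and> x ! i \<noteq> y ! i} = 1"

definition sens_edge :: "nat \<Rightarrow> pbf \<Rightarrow> bool list \<Rightarrow> bool list \<Rightarrow> bool" where
  "sens_edge k h x y \<longleftrightarrow> x \<in> pdom k h \<and> y \<in> pdom k h \<and> hdist1 x y \<and> h x \<noteq> h y"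

text \<open>Spectral norm (operator 2-norm) of the adjacency matrix A of G_h:
  sup of ||A v||_2 over vectors v on the vertex set with ||v||_2 \<le> 1.\<close>
definition sens_lambda :: "nat \<Rightarrow> pbf \<Rightarrow> real" where
  "sens_lambda k h = Sup {sqrt (\<Sum>y\<in>pdom k h. (\<Sum>x\<in>pdom k h. (if sens_edge k h y x then 1 else 0) * v x)\<^sup>2)
     | v :: bool list \<Rightarrow> real. (\<Sum>x\<in>pdom k h. (v x)\<^sup>2) \<le> 1}"

definition blk :: "nat \<Rightarrow> bool list \<Rightarrow> nat \<Rightarrow> bool list" where
  "blk m x i = take m (drop (i * m) x)"

definition pcomp :: "nat \<Rightarrow> nat \<Rightarrow> pbf \<Rightarrow> pbf \<Rightarrow> pbf" where
  "pcomp n m f g x =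
     (if length x = n * m \<and> (\<forall>i<n. blk m x i \<in> pdom m g)
      then f (map (\<lambda>i. the (g (blk m x i))) [0..<n]) else None)"

end

theory Submission
  imports Defs
begin


definition nrm :: "'a set \<Rightarrow> ('a \<Rightarrow> real) \<Rightarrow> real" where
  "nrm D v = sqrt (\<Sum>x\<in>D. (v x)\<^sup>2)"

definition Aop :: "nat \<Rightarrow> pbf \<Rightarrow> (bool list \<Rightarrow> real) \<Rightarrow> bool list \<Rightarrow> real" where
  "Aop k h v y = (\<Sum>x\<in>pdom k h. (if sens_edge k h y x then 1 else 0) * v x)"

definition bil :: "nat \<Rightarrow> pbf \<Rightarrow> (bool list \<Rightarrow> real) \<Rightarrow> (bool list \<Rightarrow> real) \<Rightarrow> real" where
  "bil k h u v = (\<Sum>y\<in>pdom k h. \<Sum>x\<in>pdom k h. if sens_edge k h y x then u y * v x else 0)"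

lemma finite_pdom: "finite (pdom k h)"
proof -
  have "pdom k h \<subseteq> {xs. set xs \<subseteq> (UNIV::bool set) \<and> length xs = k}"
    by (auto simp: pdom_def)
  moreover have "finite {xs. set xs \<subseteq> (UNIV::bool set) \<and> length xs = k}"
    by (rule finite_lists_length_eq) simp
  ultimately show ?thesis by (rule finite_subset)
qed

lemma Cauchy_Schwarz_ineq_sum:
  fixes a :: "'a \<Rightarrow> real"
  shows "(\<Sum>i\<in>I. a i * b i)\<^sup>2 \<le> (\<Sum>i\<in>I. (a i)\<^sup>2) * (\<Sum>i\<in>I. (b i)\<^sup>2)"
proof (cases "(\<Sum>i\<in>I. (b i)\<^sup>2) > 0")
  case False
  then consider "\<And>i. i\<in>I \<Longrightarrow> b i = 0" | "infinite I"
    by (metis (mono_tags, lifting) sum_pos2 zero_le_power2 zero_less_power2)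
  thus ?thesis
    by fastforce
next
  case True
  define r where "r \<equiv> (\<Sum>i\<in>I. a i * b i) / (\<Sum>i\<in>I. (b i)\<^sup>2)"
  have "0 \<le> (\<Sum>i\<in>I. (a i - r * b i)\<^sup>2)"
    by (simp add: sum_nonneg)
  also have "... = (\<Sum>i\<in>I. (a i)\<^sup>2) - 2 * r * (\<Sum>i\<in>I. a i * b i) + r\<^sup>2 * (\<Sum>i\<in>I. (b i)\<^sup>2)"
    by (simp add: algebra_simps power2_eq_square sum_distrib_left flip: sum.distrib)
  also have "\<dots> = (\<Sum>i\<in>I. (a i)\<^sup>2) - ((\<Sum>i\<in>I. a i * b i))\<^sup>2 / (\<Sum>i\<in>I. (b i)\<^sup>2)"
    by (simp add: r_def power2_eq_square)
  finally have "0 \<le> (\<Sum>i\<in>I. (a i)\<^sup>2) - ((\<Sum>i\<in>I. a i * b i))\<^sup>2 / (\<Sum>i\<in>I. (b i)\<^sup>2)" .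
  hence "((\<Sum>i\<in>I. a i * b i))\<^sup>2 / (\<Sum>i\<in>I. (b i)\<^sup>2) \<le> (\<Sum>i\<in>I. (a i)\<^sup>2)"
    by (simp add: le_diff_eq)
  thus "((\<Sum>i\<in>I. a i * b i))\<^sup>2 \<le> (\<Sum>i\<in>I. (a i)\<^sup>2) * (\<Sum>i\<in>I. (b i)\<^sup>2)"
    by (simp add: pos_divide_le_eq True)
qed

lemma CS_sum:
  fixes a b :: "'a \<Rightarrow> real"
  shows "(\<Sum>i\<in>I. a i * b i) \<le> nrm I a * nrm I b"
proof -
  have "(\<Sum>i\<in>I. a i * b i)\<^sup>2 \<le> (\<Sum>i\<in>I. (a i)\<^sup>2) * (\<Sum>i\<in>I. (b i)\<^sup>2)"
    by (rule Cauchy_Schwarz_ineq_sum)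
  hence "sqrt ((\<Sum>i\<in>I. a i * b i)\<^sup>2) \<le> sqrt ((\<Sum>i\<in>I. (a i)\<^sup>2) * (\<Sum>i\<in>I. (b i)\<^sup>2))"
    using real_sqrt_le_mono by blast
  thus ?thesis unfolding nrm_def by (simp add: real_sqrt_mult)
qed

lemma nrm_nonneg: "0 \<le> nrm D v"
  unfolding nrm_def by (simp add: sum_nonneg)

lemma nrm_zero: assumes "finite D" "nrm D v = 0" "x \<in> D" shows "v x = 0"
proof -
  have "(\<Sum>x\<in>D. (v x)\<^sup>2) = 0" using assms(2) unfolding nrm_def by simp
  hence "\<forall>x\<in>D. (v x)\<^sup>2 = 0" using assms(1) by (subst (asm) sum_nonneg_eq_0_iff) auto
  thus ?thesis using assms(3) by simp
qed

lemma nrm_sq: "(nrm D v)\<^sup>2 = (\<Sum>x\<in>D. (v x)\<^sup>2)"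
  unfolding nrm_def by (simp add: sum_nonneg)

lemma bil_Aop: "bil k h u v = (\<Sum>y\<in>pdom k h. u y * Aop k h v y)"
  unfolding bil_def Aop_def by (auto simp add: sum_distrib_left mult.assoc intro!: sum.cong)

lemma Aop_scale: "Aop k h (\<lambda>x. c * v x) y = c * Aop k h v y"
  unfolding Aop_def by (simp add: sum_distrib_left mult_ac)

definition LS :: "nat \<Rightarrow> pbf \<Rightarrow> real set" where
  "LS k h = {sqrt (\<Sum>y\<in>pdom k h. (\<Sum>x\<in>pdom k h. (if sens_edge k h y x then 1 else 0) * v x)\<^sup>2)
     | v :: bool list \<Rightarrow> real. (\<Sum>x\<in>pdom k h. (v x)\<^sup>2) \<le> 1}"

lemma sens_lambda_LS: "sens_lambda k h = Sup (LS k h)"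
  unfolding sens_lambda_def LS_def ..

lemma LS_alt: "LS k h = {nrm (pdom k h) (Aop k h v) | v. nrm (pdom k h) v \<le> 1}"
  unfolding LS_def nrm_def Aop_def by auto

lemma bdd_LS: "bdd_above (LS k h)"
proof -
  let ?D = "pdom k h"
  have "nrm ?D (Aop k h v) \<le> sqrt (real (card ?D) ^ 3)" if "nrm ?D v \<le> 1" for v
  proof -
    have vb: "\<bar>v x\<bar> \<le> 1" if "x \<in> ?D" for x
    proof -
      have "(v x)\<^sup>2 \<le> (\<Sum>x\<in>?D. (v x)\<^sup>2)"
        using that finite_pdom by (intro member_le_sum) auto
      also have "\<dots> \<le> 1" using \<open>nrm ?D v \<le> 1\<close> unfolding nrm_def by simp
      finally show ?thesis by (simp add: abs_square_le_1)
    qed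
    have ab: "\<bar>Aop k h v y\<bar> \<le> real (card ?D)" for y
    proof -
      have "\<bar>Aop k h v y\<bar> \<le> (\<Sum>x\<in>?D. \<bar>(if sens_edge k h y x then 1 else 0) * v x\<bar>)"
        unfolding Aop_def by (rule sum_abs)
      also have "\<dots> \<le> (\<Sum>x\<in>?D. 1)"
        by (intro sum_mono) (auto simp: vb)
      finally show ?thesis by simp
    qed
    have "(\<Sum>y\<in>?D. (Aop k h v y)\<^sup>2) \<le> (\<Sum>y\<in>?D. (real (card ?D))\<^sup>2)"
      by (intro sum_mono) (metis ab abs_ge_zero abs_le_square_iff abs_of_nonneg of_nat_0_le_iff order_trans)
    also have "\<dots> = real (card ?D) ^ 3" by (simp add: power2_eq_square power3_eq_cube)
    finally show ?thesis unfolding nrm_def by simp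
  qed
  thus ?thesis unfolding LS_alt bdd_above_def by blast
qed

lemma LS_ne: "nrm (pdom k h) (Aop k h (\<lambda>_. 0)) \<in> LS k h"
  unfolding LS_alt by (auto simp: nrm_def)

lemma lam_nonneg: "0 \<le> sens_lambda k h"
proof -
  have "nrm (pdom k h) (Aop k h (\<lambda>_. 0)) \<le> sens_lambda k h"
    unfolding sens_lambda_LS by (rule cSup_upper[OF LS_ne bdd_LS])
  thus ?thesis using nrm_nonneg order_trans by blast
qed

lemma Aop_le: "nrm (pdom k h) (Aop k h v) \<le> sens_lambda k h * nrm (pdom k h) v"
proof (cases "nrm (pdom k h) v = 0")
  case True
  hence "Aop k h v y = 0" for y
    unfolding Aop_def using nrm_zero[OF finite_pdom True] by (intro sum.neutral) auto
  thus ?thesis using lam_nonneg[of k h] nrm_nonneg[of "pdom k h" v] by (simp add: nrm_def)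
next
  case False
  let ?c = "nrm (pdom k h) v"
  have cpos: "?c > 0" using False nrm_nonneg by (metis less_eq_real_def)
  define w where "w = (\<lambda>x. (1 / ?c) * v x)"
  have "nrm (pdom k h) w = 1"
    unfolding w_def nrm_def
    using cpos by (simp add: power_mult_distrib sum_distrib_left[symmetric] power_divide nrm_sq[symmetric] flip: sum_divide_distrib)
  hence "nrm (pdom k h) (Aop k h w) \<in> LS k h" unfolding LS_alt by auto
  hence "nrm (pdom k h) (Aop k h w) \<le> sens_lambda k h"
    unfolding sens_lambda_LS by (rule cSup_upper[OF _ bdd_LS])
  moreover have "nrm (pdom k h) (Aop k h w) = nrm (pdom k h) (Aop k h v) / ?c"
    unfolding w_def Aop_scale nrm_def using cpos
    by (simp add: power_mult_distrib power_divide real_sqrt_divide sum_nonneg flip: sum_divide_distrib)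
  ultimately show ?thesis using cpos by (simp add: divide_le_eq mult.commute)
qed

lemma bil_le: "bil k h u v \<le> sens_lambda k h * nrm (pdom k h) u * nrm (pdom k h) v"
proof -
  have "bil k h u v \<le> nrm (pdom k h) u * nrm (pdom k h) (Aop k h v)"
    unfolding bil_Aop by (rule CS_sum)
  also have "\<dots> \<le> nrm (pdom k h) u * (sens_lambda k h * nrm (pdom k h) v)"
    by (intro mult_left_mono Aop_le nrm_nonneg)
  finally show ?thesis by (simp add: mult_ac)
qed

lemma lam_le:
  assumes M: "0 \<le> M" and H: "\<And>u v. bil k h u v \<le> M * nrm (pdom k h) u * nrm (pdom k h) v"
  shows "sens_lambda k h \<le> M"
  unfolding sens_lambda_LS
proof (rule cSup_least)
  show "LS k h \<noteq> {}" using LS_ne by blast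
next
  fix r assume "r \<in> LS k h"
  then obtain v where r: "r = nrm (pdom k h) (Aop k h v)" and v: "nrm (pdom k h) v \<le> 1"
    unfolding LS_alt by auto
  let ?a = "nrm (pdom k h) (Aop k h v)"
  have "?a\<^sup>2 = bil k h (Aop k h v) v"
    unfolding bil_Aop nrm_sq by (simp add: power2_eq_square)
  also have "\<dots> \<le> M * ?a * nrm (pdom k h) v" by (rule H)
  also have "\<dots> \<le> M * ?a" using v M nrm_nonneg[of "pdom k h" "Aop k h v"]
    by (simp add: mult_left_le)
  finally have "?a\<^sup>2 \<le> M * ?a" .
  hence "?a \<le> M" using nrm_nonneg[of "pdom k h" "Aop k h v"] M
    by (metis not_le power2_eq_square mult_strict_right_mono le_less_trans less_le_not_le mult_le_cancel_right)
  thus "r \<le> M" using r by simp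
qed



definition upd :: "nat \<Rightarrow> nat \<Rightarrow> bool list \<Rightarrow> bool list \<Rightarrow> bool list" where
  "upd m i s b = take (i*m) s @ b @ drop (Suc i * m) s"

lemma blockpos: assumes "(r::nat) < m" shows "((i::nat)*m \<le> j*m+r \<and> j*m+r < i*m+m) \<longleftrightarrow> i = j"
proof
  assume H: "i*m \<le> j*m+r \<and> j*m+r < i*m+m"
  show "i = j"
  proof (rule ccontr)
    assume "i \<noteq> j"
    then consider "j < i" | "i < j" by (meson linorder_neqE_nat)
    thus False
    proof cases
      case 1
      hence "Suc j * m \<le> i * m" by (intro mult_le_mono1) simp
      thus False using H assms by simp
    next
      case 2
      hence "Suc i * m \<le> j * m" by (intro mult_le_mono1) simp
      thus False using H assms by simp
    qed
  qed
qed (use assms in auto)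

lemma blk_bound: assumes "(j::nat) < n" "r < m" shows "j*m + r < n*m"
proof -
  have "Suc j * m \<le> n * m" using assms by (intro mult_le_mono1) simp
  thus ?thesis using assms by simp
qed

lemma len_upd: assumes "length s = n*m" "i < n" "length b = m"
  shows "length (upd m i s b) = n*m"
proof -
  have "Suc i * m \<le> n * m" using assms by (intro mult_le_mono1) simp
  thus ?thesis using assms unfolding upd_def by (simp add: algebra_simps)
qed

lemma nth_upd: assumes "length s = n*m" "i < n" "length b = m" "k < n*m"
  shows "upd m i s b ! k = (if i*m \<le> k \<and> k < i*m+m then b!(k - i*m) else s!k)"
proof -
  have le: "Suc i * m \<le> n * m" using assms by (intro mult_le_mono1) simp
  have lt: "length (take (i*m) s) = i*m" using assms le by simp
  consider "k < i*m" | "i*m \<le> k \<and> k < i*m+m" | "i*m+m \<le> k" by linarith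
  thus ?thesis
  proof cases
    case 1
    thus ?thesis unfolding upd_def using le assms(1) by (simp add: nth_append lt)
  next
    case 2
    thus ?thesis unfolding upd_def using assms(2,3) le assms(1) by (auto simp add: nth_append lt min_def)
  next
    case 3
    have "upd m i s b ! k = drop (Suc i * m) s ! (k - i*m - m)"
      unfolding upd_def using 3 assms le by (auto simp add: nth_append lt min_def)
    also have "\<dots> = s ! k" using 3 le assms(1,4) by (simp add: algebra_simps)
    finally show ?thesis using 3 by simp
  qed
qed

lemma length_blk: assumes "length s = n*m" "i < n" shows "length (blk m s i) = m"
proof -
  have le: "Suc i * m \<le> n * m" using assms by (intro mult_le_mono1) simp
  thus ?thesis using assms unfolding blk_def by simp
qed

lemma nth_blk: assumes "length s = n*m" "i < n" "r < m" shows "blk m s i ! r = s!(i*m+r)"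
proof -
  have le: "Suc i * m \<le> n * m" using assms by (intro mult_le_mono1) simp
  thus ?thesis using assms unfolding blk_def by (simp add: add.commute)
qed

lemma blk_eq: assumes "length s = n*m" "length t = n*m" "\<And>j. j<n \<Longrightarrow> blk m s j = blk m t j"
  shows "s = t"
proof (rule nth_equalityI)
  show "length s = length t" using assms by simp
next
  fix k assume "k < length s"
  hence k: "k < n*m" using assms by simp
  hence m0: "m > 0" by (cases m) auto
  define j where "j = k div m"
  define r where "r = k mod m"
  have kk: "k = j*m + r" unfolding j_def r_def by simp
  have r: "r < m" unfolding r_def using m0 by simp
  have j: "j < n" unfolding j_def using k by (simp add: less_mult_imp_div_less)
  have "s!k = blk m s j ! r" using nth_blk[OF assms(1) j r] kk by simp
  also have "\<dots> = blk m t j ! r" using assms(3) j by simp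
  also have "\<dots> = t!k" using nth_blk[OF assms(2) j r] kk by simp
  finally show "s!k = t!k" .
qed

lemma blk_upd: assumes "length s = n*m" "i < n" "length b = m" "j < n"
  shows "blk m (upd m i s b) j = (if j = i then b else blk m s j)"
proof (rule nth_equalityI)
  have lu: "length (upd m i s b) = n*m" by (rule len_upd[OF assms(1-3)])
  show "length (blk m (upd m i s b) j) = length (if j = i then b else blk m s j)"
    using length_blk[OF lu assms(4)] length_blk[OF assms(1,4)] assms by simp
  fix r assume "r < length (blk m (upd m i s b) j)"
  hence r: "r < m" using length_blk[OF lu assms(4)] by simp
  have "blk m (upd m i s b) j ! r = upd m i s b ! (j*m+r)" by (rule nth_blk[OF lu assms(4) r])
  also have "\<dots> = (if i*m \<le> j*m+r \<and> j*m+r < i*m+m then b!(j*m+r - i*m) else s!(j*m+r))"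
    by (rule nth_upd[OF assms(1-3) blk_bound[OF assms(4) r]])
  also have "\<dots> = (if j = i then b else blk m s j) ! r"
  proof (cases "j = i")
    case True thus ?thesis using r by simp
  next
    case False
    hence "\<not> (i*m \<le> j*m+r \<and> j*m+r < i*m+m)" using blockpos[OF r, of i j] by simp
    thus ?thesis using False nth_blk[OF assms(1,4) r] by (simp only: if_False if_not_P)
  qed
  finally show "blk m (upd m i s b) j ! r = (if j = i then b else blk m s j) ! r" .
qed

lemma upd_blk: assumes "length s = n*m" "i < n" shows "upd m i s (blk m s i) = s"
proof (rule blk_eq[of _ n m])
  show "length (upd m i s (blk m s i)) = n*m" by (rule len_upd[OF assms length_blk[OF assms]])
  show "length s = n*m" by fact
  fix j assume j: "j < n"
  show "blk m (upd m i s (blk m s i)) j = blk m s j"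
    using blk_upd[OF assms length_blk[OF assms] j] by simp
qed

lemma upd_upd: assumes "length s = n*m" "i < n" "length a = m" "length b = m"
  shows "upd m i (upd m i s a) b = upd m i s b"
proof (rule blk_eq[of _ n m])
  have l1: "length (upd m i s a) = n*m" by (rule len_upd[OF assms(1,2,3)])
  show "length (upd m i (upd m i s a) b) = n*m" by (rule len_upd[OF l1 assms(2,4)])
  show "length (upd m i s b) = n*m" by (rule len_upd[OF assms(1,2,4)])
  fix j assume j: "j < n"
  show "blk m (upd m i (upd m i s a) b) j = blk m (upd m i s b) j"
    using blk_upd[OF l1 assms(2,4) j] blk_upd[OF assms(1,2,4) j] blk_upd[OF assms(1,2,3) j] by simp
qed

lemma diffset_upd: assumes "length s = n*m" "i < n" "length b = m"
  shows "{k. k < length s \<and> s!k \<noteq> upd m i s b ! k} = (\<lambda>r. i*m + r) ` {r. r < length (blk m s i) \<and> blk m s i ! r \<noteq> b ! r}"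
proof -
  have lb: "length (blk m s i) = m" by (rule length_blk[OF assms(1,2)])
  show ?thesis
  proof (intro set_eqI iffI)
    fix k assume "k \<in> {k. k < length s \<and> s!k \<noteq> upd m i s b ! k}"
    hence k: "k < n*m" and d: "s!k \<noteq> upd m i s b ! k" using assms by auto
    have inb: "i*m \<le> k \<and> k < i*m+m" using d nth_upd[OF assms k] by (auto split: if_splits)
    define r where "r = k - i*m"
    have kr: "k = i*m + r" and r: "r < m" using inb unfolding r_def by auto
    have "blk m s i ! r \<noteq> b ! r" using d nth_upd[OF assms k] nth_blk[OF assms(1,2) r] kr inb by auto
    thus "k \<in> (\<lambda>r. i*m + r) ` {r. r < length (blk m s i) \<and> blk m s i ! r \<noteq> b ! r}"
      using kr r lb by auto
  next
    fix k assume "k \<in> (\<lambda>r. i*m + r) ` {r. r < length (blk m s i) \<and> blk m s i ! r \<noteq> b ! r}"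
    then obtain r where kr: "k = i*m + r" and r: "r < m" and d: "blk m s i ! r \<noteq> b ! r"
      using lb by auto
    have k: "k < n*m" using blk_bound[OF assms(2) r] kr by simp
    show "k \<in> {k. k < length s \<and> s!k \<noteq> upd m i s b ! k}"
      using k assms(1) d nth_upd[OF assms k] nth_blk[OF assms(1,2) r] kr r by auto
  qed
qed

lemma hdist_upd: assumes "length s = n*m" "i < n" "length b = m"
  shows "hdist1 s (upd m i s b) \<longleftrightarrow> hdist1 (blk m s i) b"
proof -
  have lb: "length (blk m s i) = m" by (rule length_blk[OF assms(1,2)])
  have "card {k. k < length s \<and> s!k \<noteq> upd m i s b ! k} = card {r. r < length (blk m s i) \<and> blk m s i ! r \<noteq> b ! r}"
    unfolding diffset_upd[OF assms] by (rule card_image) (simp add: inj_on_def)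
  thus ?thesis unfolding hdist1_def using len_upd[OF assms] assms lb by simp
qed

lemma hdist_sym1: assumes h: "hdist1 x y" shows "hdist1 y x"
proof -
  have L: "length x = length y" and C: "card {i. i < length x \<and> x!i \<noteq> y!i} = 1"
    using h unfolding hdist1_def by blast+
  have S: "{i. i < length y \<and> y!i \<noteq> x!i} = {i. i < length x \<and> x!i \<noteq> y!i}"
  proof (rule Collect_cong)
    fix i show "(i < length y \<and> y!i \<noteq> x!i) = (i < length x \<and> x!i \<noteq> y!i)" using L by metis
  qed
  have "card {i. i < length y \<and> y!i \<noteq> x!i} = 1" unfolding S by (rule C)
  thus ?thesis unfolding hdist1_def by (rule conjI[OF L[symmetric]])
qed

lemma hdist_sym: "hdist1 x y \<longleftrightarrow> hdist1 y x"
  using hdist_sym1 by blast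

lemma sens_edge_sym: "sens_edge k h x y \<longleftrightarrow> sens_edge k h y x"
  unfolding sens_edge_def hdist_sym[of x y] by auto

lemma hdist_neq: assumes "hdist1 x y" shows "x \<noteq> y"
proof
  assume "x = y"
  with assms have "hdist1 x x" by simp
  thus False unfolding hdist1_def by simp
qed

lemma hdist_block: assumes "length s = n*m" "length t = n*m" "hdist1 s t"
  shows "\<exists>i<n. t = upd m i s (blk m t i)"
proof -
  have "card {k. k < length s \<and> s!k \<noteq> t!k} = 1" using assms(3) unfolding hdist1_def by blast
  then obtain k where K: "{k. k < length s \<and> s!k \<noteq> t!k} = {k}" by (meson card_1_singletonE)
  hence k: "k < n*m" using assms by auto
  hence m0: "m > 0" by (cases m) auto
  define i where "i = k div m"
  have i: "i < n" using k unfolding i_def by (simp add: less_mult_imp_div_less)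
  have "t = upd m i s (blk m t i)"
  proof (rule blk_eq[of _ n m])
    show "length t = n*m" by fact
    show "length (upd m i s (blk m t i)) = n*m" using len_upd[OF assms(1) i length_blk[OF assms(2) i]] .
    fix j assume j: "j < n"
    show "blk m t j = blk m (upd m i s (blk m t i)) j"
    proof (cases "j = i")
      case True thus ?thesis using blk_upd[OF assms(1) i length_blk[OF assms(2) i] j] by simp
    next
      case False
      have "blk m t j = blk m s j"
      proof (rule nth_equalityI)
        show "length (blk m t j) = length (blk m s j)" using length_blk[OF assms(2) j] length_blk[OF assms(1) j] by simp
        fix r assume "r < length (blk m t j)"
        hence r: "r < m" using length_blk[OF assms(2) j] by simp
        have "j*m + r \<noteq> k"
        proof
          assume "j*m+r = k"
          hence "k div m = (r + j*m) div m" by (simp add: add.commute)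
          also have "\<dots> = j" using r m0 by simp
          finally have "k div m = j" .
          thus False using False i_def by simp
        qed
        hence "j*m+r \<notin> {k. k < length s \<and> s!k \<noteq> t!k}" using K by simp
        hence "s!(j*m+r) = t!(j*m+r)" using blk_bound[OF j r] assms(1) by simp
        thus "blk m t j ! r = blk m s j ! r" using nth_blk[OF assms(1) j r] nth_blk[OF assms(2) j r] by simp
      qed
      thus ?thesis using blk_upd[OF assms(1) i length_blk[OF assms(2) i] j] False by simp
    qed
  qed
  thus ?thesis using i by blast
qed



definition zf :: "nat \<Rightarrow> nat \<Rightarrow> pbf \<Rightarrow> bool list \<Rightarrow> bool list" where
  "zf n m g s = map (\<lambda>j. the (g (blk m s j))) [0..<n]"
definition fl :: "nat \<Rightarrow> bool list \<Rightarrow> bool list" where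
  "fl i z = z[i := \<not> z!i]"
definition Nb :: "nat \<Rightarrow> pbf \<Rightarrow> bool list \<Rightarrow> bool list set" where
  "Nb k h a = {b \<in> pdom k h. sens_edge k h a b}"
definition Ifl :: "nat \<Rightarrow> pbf \<Rightarrow> bool list \<Rightarrow> nat set" where
  "Ifl n f z = {i. i < n \<and> sens_edge n f z (fl i z)}"

lemma length_zf[simp]: "length (zf n m g s) = n"
  unfolding zf_def by simp

lemma nth_zf: "j < n \<Longrightarrow> zf n m g s ! j = the (g (blk m s j))"
  unfolding zf_def by simp

lemma pdom_pcomp: "s \<in> pdom (n*m) (pcomp n m f g) \<longleftrightarrow>
   length s = n*m \<and> (\<forall>j<n. blk m s j \<in> pdom m g) \<and> zf n m g s \<in> pdom n f"
  unfolding pdom_def pcomp_def zf_def by (simp; blast)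

lemma pcomp_val: assumes "s \<in> pdom (n*m) (pcomp n m f g)" shows "pcomp n m f g s = f (zf n m g s)"
proof -
  have "length s = n*m \<and> (\<forall>j<n. blk m s j \<in> pdom m g)" using assms pdom_pcomp by blast
  thus ?thesis unfolding pcomp_def zf_def by simp
qed

lemma zf_upd: assumes "length s = n*m" "i < n" "length b = m"
  shows "zf n m g (upd m i s b) = (zf n m g s)[i := the (g b)]"
proof (rule nth_equalityI)
  show "length (zf n m g (upd m i s b)) = length ((zf n m g s)[i := the (g b)])" by simp
  fix j assume "j < length (zf n m g (upd m i s b))"
  hence j: "j < n" by simp
  show "zf n m g (upd m i s b) ! j = (zf n m g s)[i := the (g b)] ! j"
    using blk_upd[OF assms j] j by (simp add: nth_zf nth_list_update)
qed

lemma length_fl[simp]: "length (fl i z) = length z"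
  unfolding fl_def by simp

lemma fl_inj: assumes "i < length z" "j < length z" "fl i z = fl j z" shows "i = j"
proof (rule ccontr)
  assume "i \<noteq> j"
  hence "fl j z ! i = z ! i" unfolding fl_def by simp
  moreover have "fl i z ! i = (\<not> z ! i)" unfolding fl_def using assms(1) by simp
  ultimately show False using assms(3) by simp
qed

lemma hdist_fl: assumes "i < length x" shows "hdist1 x (fl i x)"
proof -
  have "{k. k < length x \<and> x!k \<noteq> fl i x ! k} = {i}"
    using assms unfolding fl_def by (auto simp: nth_list_update)
  thus ?thesis unfolding hdist1_def by simp
qed

lemma hdist_fl_ex: assumes "hdist1 x y" shows "\<exists>i<length x. y = fl i x"
proof -
  have L: "length x = length y" and C: "card {k. k < length x \<and> x!k \<noteq> y!k} = 1"
    using assms unfolding hdist1_def by blast+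
  then obtain i where K: "{k. k < length x \<and> x!k \<noteq> y!k} = {i}" by (meson card_1_singletonE)
  hence i: "i < length x" and d: "x!i \<noteq> y!i" by auto
  have "y = fl i x"
  proof (rule nth_equalityI)
    show "length y = length (fl i x)" using L by simp
    fix k assume "k < length y"
    hence k: "k < length x" using L by simp
    show "y ! k = fl i x ! k"
    proof (cases "k = i")
      case True thus ?thesis using d i unfolding fl_def by simp
    next
      case False
      hence "k \<notin> {k. k < length x \<and> x!k \<noteq> y!k}" using K by simp
      hence "x!k = y!k" using k by simp
      thus ?thesis using False unfolding fl_def by simp
    qed
  qed
  thus ?thesis using i by blast
qed

lemma finite_Nb: "finite (Nb k h a)"
  unfolding Nb_def using finite_pdom by simp

lemma finite_Ifl: "finite (Ifl n f z)"
  unfolding Ifl_def by simp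

lemma bil_form: "bil k h u v = (\<Sum>y\<in>pdom k h. u y * (\<Sum>x\<in>Nb k h y. v x))"
proof -
  have "(\<Sum>x\<in>pdom k h. if sens_edge k h y x then u y * v x else 0) = u y * (\<Sum>x\<in>Nb k h y. v x)" for y
    unfolding Nb_def sum_distrib_left by (simp add: sum.inter_filter[OF finite_pdom])
  thus ?thesis unfolding bil_def by simp
qed

lemma nbr_f: assumes "z \<in> pdom n f"
  shows "Nb n f z = (\<lambda>i. fl i z) ` Ifl n f z" and "inj_on (\<lambda>i. fl i z) (Ifl n f z)"
proof -
  have lz: "length z = n" using assms unfolding pdom_def by simp
  show "Nb n f z = (\<lambda>i. fl i z) ` Ifl n f z"
  proof (intro set_eqI iffI)
    fix z' assume "z' \<in> Nb n f z"
    hence e: "sens_edge n f z z'" unfolding Nb_def by simp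
    hence "hdist1 z z'" unfolding sens_edge_def by simp
    then obtain i where i: "i < length z" and z': "z' = fl i z" using hdist_fl_ex by blast
    have "i \<in> Ifl n f z" unfolding Ifl_def using i lz e z' by simp
    thus "z' \<in> (\<lambda>i. fl i z) ` Ifl n f z" using z' by blast
  next
    fix z' assume "z' \<in> (\<lambda>i. fl i z) ` Ifl n f z"
    then obtain i where i: "i \<in> Ifl n f z" and z': "z' = fl i z" by blast
    hence "sens_edge n f z z'" unfolding Ifl_def by simp
    thus "z' \<in> Nb n f z" unfolding Nb_def sens_edge_def by simp
  qed
  show "inj_on (\<lambda>i. fl i z) (Ifl n f z)"
  proof (rule inj_onI)
    fix i j assume "i \<in> Ifl n f z" "j \<in> Ifl n f z" "fl i z = fl j z"
    thus "i = j" using fl_inj[of i z j] lz unfolding Ifl_def by simp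
  qed
qed

lemma bil_f_form: "bil n f p q = (\<Sum>z\<in>pdom n f. p z * (\<Sum>i\<in>Ifl n f z. q (fl i z)))"
  unfolding bil_form
proof (rule sum.cong[OF refl])
  fix z assume z: "z \<in> pdom n f"
  show "p z * sum q (Nb n f z) = p z * (\<Sum>i\<in>Ifl n f z. q (fl i z))"
    unfolding nbr_f(1)[OF z] sum.reindex[OF nbr_f(2)[OF z]] by simp
qed



lemma some_bool_neq: assumes "a \<in> pdom m g" "b \<in> pdom m g" "g a \<noteq> g b"
  shows "the (g b) = (\<not> the (g a))"
proof -
  obtain x where x: "g a = Some x" using assms(1) unfolding pdom_def by auto
  obtain y where y: "g b = Some y" using assms(2) unfolding pdom_def by auto
  show ?thesis using x y assms(3) by auto
qed

lemma pdom_len: "a \<in> pdom k h \<Longrightarrow> length a = k"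
  unfolding pdom_def by simp

lemma zf_upd_fl:
  assumes "length s = n*m" "i < n" "blk m s i \<in> pdom m g" "b \<in> Nb m g (blk m s i)"
  shows "zf n m g (upd m i s b) = fl i (zf n m g s)"
proof -
  have b: "b \<in> pdom m g" and e: "g (blk m s i) \<noteq> g b" using assms(4) unfolding Nb_def sens_edge_def by auto
  have "the (g b) = (\<not> zf n m g s ! i)"
    using some_bool_neq[OF assms(3) b e] nth_zf[OF assms(2)] by simp
  thus ?thesis using zf_upd[OF assms(1,2) pdom_len[OF b]] unfolding fl_def by simp
qed

lemma nb_fg:
  assumes sV: "s \<in> pdom (n*m) (pcomp n m f g)"
  shows "Nb (n*m) (pcomp n m f g) s = (\<lambda>(i,b). upd m i s b) ` (SIGMA i:Ifl n f (zf n m g s). Nb m g (blk m s i))"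
    and "inj_on (\<lambda>(i,b). upd m i s b) (SIGMA i:Ifl n f (zf n m g s). Nb m g (blk m s i))"
proof -
  have ls: "length s = n*m" and bs: "\<And>j. j<n \<Longrightarrow> blk m s j \<in> pdom m g" and zs: "zf n m g s \<in> pdom n f"
    using sV pdom_pcomp by blast+
  show "Nb (n*m) (pcomp n m f g) s = (\<lambda>(i,b). upd m i s b) ` (SIGMA i:Ifl n f (zf n m g s). Nb m g (blk m s i))"
  proof (intro set_eqI iffI)
    fix t assume "t \<in> Nb (n*m) (pcomp n m f g) s"
    hence tV: "t \<in> pdom (n*m) (pcomp n m f g)" and hd: "hdist1 s t" and Fd: "pcomp n m f g s \<noteq> pcomp n m f g t"
      unfolding Nb_def sens_edge_def by auto
    have lt: "length t = n*m" and bt: "\<And>j. j<n \<Longrightarrow> blk m t j \<in> pdom m g" and zt: "zf n m g t \<in> pdom n f"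
      using tV pdom_pcomp by blast+
    obtain i where i: "i < n" and teq: "t = upd m i s (blk m t i)" using hdist_block[OF ls lt hd] by blast
    define b where "b = blk m t i"
    have b: "b \<in> pdom m g" using bt[OF i] unfolding b_def .
    have lb: "length b = m" using pdom_len[OF b] .
    have teq': "t = upd m i s b" using teq unfolding b_def .
    have hb: "hdist1 (blk m s i) b" using hd hdist_upd[OF ls i lb] teq' by simp
    have gd: "g (blk m s i) \<noteq> g b"
    proof
      assume eq: "g (blk m s i) = g b"
      have "zf n m g t = (zf n m g s)[i := the (g b)]" using zf_upd[OF ls i lb] teq' by simp
      also have "\<dots> = (zf n m g s)[i := zf n m g s ! i]" using eq nth_zf[OF i] by simp
      also have "\<dots> = zf n m g s" by simp
      finally have "pcomp n m f g t = pcomp n m f g s" using pcomp_val[OF tV] pcomp_val[OF sV] by simp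
      thus False using Fd by simp
    qed
    have bN: "b \<in> Nb m g (blk m s i)" unfolding Nb_def sens_edge_def using b bs[OF i] hb gd by simp
    have ztf: "zf n m g t = fl i (zf n m g s)" using zf_upd_fl[OF ls i bs[OF i] bN] teq' by simp
    have "sens_edge n f (zf n m g s) (fl i (zf n m g s))"
      unfolding sens_edge_def using zs zt ztf hdist_fl[of i "zf n m g s"] i
        Fd pcomp_val[OF tV] pcomp_val[OF sV] by simp
    hence "i \<in> Ifl n f (zf n m g s)" unfolding Ifl_def using i by simp
    hence "(i,b) \<in> (SIGMA i:Ifl n f (zf n m g s). Nb m g (blk m s i))" using bN by simp
    thus "t \<in> (\<lambda>(i,b). upd m i s b) ` (SIGMA i:Ifl n f (zf n m g s). Nb m g (blk m s i))"
      by (rule image_eqI[rotated]) (simp add: teq')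
  next
    fix t assume "t \<in> (\<lambda>(i,b). upd m i s b) ` (SIGMA i:Ifl n f (zf n m g s). Nb m g (blk m s i))"
    then obtain p where pS: "p \<in> (SIGMA i:Ifl n f (zf n m g s). Nb m g (blk m s i))" and tp: "t = (\<lambda>(i,b). upd m i s b) p"
      by (rule imageE)
    obtain i b where pib: "p = (i,b)" by (cases p)
    have iI: "i \<in> Ifl n f (zf n m g s)" and bN: "b \<in> Nb m g (blk m s i)" using pS unfolding pib mem_Sigma_iff by blast+
    have t: "t = upd m i s b" using tp pib by simp
    have i: "i < n" and ef: "sens_edge n f (zf n m g s) (fl i (zf n m g s))" using iI unfolding Ifl_def by auto
    have b: "b \<in> pdom m g" and hb: "hdist1 (blk m s i) b" using bN unfolding Nb_def sens_edge_def by auto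
    have lb: "length b = m" using pdom_len[OF b] .
    have ztf: "zf n m g t = fl i (zf n m g s)" using zf_upd_fl[OF ls i bs[OF i] bN] t by simp
    have lt: "length t = n*m" using len_upd[OF ls i lb] t by simp
    have bt: "\<forall>j<n. blk m t j \<in> pdom m g" using blk_upd[OF ls i lb] t b bs by simp
    have zt: "zf n m g t \<in> pdom n f" using ztf ef unfolding sens_edge_def by simp
    have tV: "t \<in> pdom (n*m) (pcomp n m f g)" using pdom_pcomp lt bt zt by blast
    have hd: "hdist1 s t" using hdist_upd[OF ls i lb] hb t by simp
    have "pcomp n m f g s \<noteq> pcomp n m f g t"
      using pcomp_val[OF tV] pcomp_val[OF sV] ztf ef unfolding sens_edge_def by simp
    thus "t \<in> Nb (n*m) (pcomp n m f g) s" unfolding Nb_def sens_edge_def using sV tV hd by simp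
  qed
  show "inj_on (\<lambda>(i,b). upd m i s b) (SIGMA i:Ifl n f (zf n m g s). Nb m g (blk m s i))"
  proof (rule inj_onI, clarsimp)
    fix i b i' b' assume iI: "i \<in> Ifl n f (zf n m g s)" and bN: "b \<in> Nb m g (blk m s i)"
      and iI': "i' \<in> Ifl n f (zf n m g s)" and bN': "b' \<in> Nb m g (blk m s i')"
      and eq: "upd m i s b = upd m i' s b'"
    have i: "i < n" and i': "i' < n" using iI iI' unfolding Ifl_def by auto
    have lb: "length b = m" and lb': "length b' = m" using bN bN' pdom_len unfolding Nb_def by auto
    have "hdist1 (blk m s i) b" using bN unfolding Nb_def sens_edge_def by blast
    hence "blk m s i \<noteq> b" by (rule hdist_neq)
    hence nb: "b \<noteq> blk m s i" by (rule not_sym)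
    have "blk m (upd m i s b) i = b" using blk_upd[OF ls i lb i] by simp
    moreover have "blk m (upd m i' s b') i = (if i = i' then b' else blk m s i)" using blk_upd[OF ls i' lb' i] by simp
    ultimately have bi: "b = (if i = i' then b' else blk m s i)" using eq by simp
    hence ii: "i = i'" using nb by (cases "i = i'") auto
    thus "i = i' \<and> b = b'" using bi by simp
  qed
qed

lemma bil_fg_form:
  "bil (n*m) (pcomp n m f g) x y =
    (\<Sum>s\<in>pdom (n*m) (pcomp n m f g). x s * (\<Sum>i\<in>Ifl n f (zf n m g s). \<Sum>b\<in>Nb m g (blk m s i). y (upd m i s b)))"
  unfolding bil_form
proof (rule sum.cong[OF refl])
  fix s assume sV: "s \<in> pdom (n*m) (pcomp n m f g)"
  have "sum y (Nb (n*m) (pcomp n m f g) s) = (\<Sum>(i,b)\<in>(SIGMA i:Ifl n f (zf n m g s). Nb m g (blk m s i)). y (upd m i s b))"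
    unfolding nb_fg(1)[OF sV] sum.reindex[OF nb_fg(2)[OF sV]] by (simp add: case_prod_beta)
  also have "\<dots> = (\<Sum>i\<in>Ifl n f (zf n m g s). \<Sum>b\<in>Nb m g (blk m s i). y (upd m i s b))"
    by (rule sum.Sigma[symmetric]) (auto simp: finite_Ifl finite_Nb)
  finally show "x s * sum y (Nb (n*m) (pcomp n m f g) s) = x s * (\<Sum>i\<in>Ifl n f (zf n m g s). \<Sum>b\<in>Nb m g (blk m s i). y (upd m i s b))"
    by simp
qed



definition W :: "nat \<Rightarrow> nat \<Rightarrow> pbf \<Rightarrow> bool list \<Rightarrow> bool list set" where
  "W n m g z = {s. length s = n*m \<and> (\<forall>j<n. blk m s j \<in> pdom m g) \<and> zf n m g s = z}"

definition ky :: "nat \<Rightarrow> nat \<Rightarrow> bool list \<Rightarrow> bool list" where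
  "ky m i s = upd m i s (replicate m False)"

lemma finite_len: "finite {s::bool list. length s = k}"
proof -
  have "finite {xs. set xs \<subseteq> (UNIV::bool set) \<and> length xs = k}"
    by (rule finite_lists_length_eq) simp
  thus ?thesis by simp
qed

lemma finite_W: "finite (W n m g z)"
  by (rule finite_subset[OF _ finite_len[of "n*m"]]) (auto simp: W_def)

lemma V_W: assumes "z \<in> pdom n f"
  shows "{s \<in> pdom (n*m) (pcomp n m f g). zf n m g s = z} = W n m g z"
  using assms unfolding W_def by (auto simp: pdom_pcomp)

lemma nrm_le: assumes "(\<Sum>x\<in>A. (u x)\<^sup>2) \<le> (\<Sum>x\<in>B. (v x)\<^sup>2)" shows "nrm A u \<le> nrm B v"
  unfolding nrm_def using assms by simp

lemma K2:
  assumes i: "i < n" and c: "c \<in> ky m i ` W n m g z"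
  shows "(\<Sum>s\<in>{s\<in>W n m g z. ky m i s = c}. x s * (\<Sum>b\<in>Nb m g (blk m s i). y (upd m i s b)))
     \<le> sens_lambda m g * nrm {s\<in>W n m g z. ky m i s = c} x * nrm {t\<in>W n m g (fl i z). ky m i t = c} y"
proof -
  define Sc where "Sc = {s\<in>W n m g z. ky m i s = c}"
  define Tc where "Tc = {t\<in>W n m g (fl i z). ky m i t = c}"
  have lr: "length (replicate m False) = m" by simp
  have Sc_props: "length s = n*m" "\<And>j. j<n \<Longrightarrow> blk m s j \<in> pdom m g" "zf n m g s = z"
     "upd m i s (replicate m False) = c" if "s \<in> Sc" for s
    using that unfolding Sc_def W_def ky_def by auto
  have Sc_eq: "s = upd m i c (blk m s i)" if "s \<in> Sc" for s
  proof -
    have "upd m i c (blk m s i) = upd m i (upd m i s (replicate m False)) (blk m s i)"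
      using Sc_props(4)[OF that] by simp
    also have "\<dots> = upd m i s (blk m s i)"
      by (rule upd_upd[OF Sc_props(1)[OF that] i lr length_blk[OF Sc_props(1)[OF that] i]])
    also have "\<dots> = s" by (rule upd_blk[OF Sc_props(1)[OF that] i])
    finally show ?thesis by simp
  qed
  have Sc_eq': "upd m i c (blk m s i) = s" if "s \<in> Sc" for s
    using Sc_eq[OF that] by (rule sym)
  define A where "A = (\<lambda>s. blk m s i) ` Sc"
  have injA: "inj_on (\<lambda>s. blk m s i) Sc"
  proof (rule inj_onI)
    fix s s' assume s: "s \<in> Sc" and s': "s' \<in> Sc" and eq: "blk m s i = blk m s' i"
    have "s = upd m i c (blk m s i)" by (rule Sc_eq[OF s])
    also have "\<dots> = upd m i c (blk m s' i)" using eq by (rule arg_cong)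
    also have "\<dots> = s'" by (rule Sc_eq'[OF s'])
    finally show "s = s'" .
  qed
  have A_dom: "a \<in> pdom m g" if aA: "a \<in> A" for a
  proof -
    obtain s where s: "s \<in> Sc" and a: "a = blk m s i" using aA unfolding A_def by blast
    show ?thesis using Sc_props(2)[OF s i] a by simp
  qed
  obtain s0 where s0: "s0 \<in> W n m g z" and c0: "c = ky m i s0" using c by blast
  have ls0: "length s0 = n*m" using s0 unfolding W_def by simp
  have lc: "length c = n*m" using len_upd[OF ls0 i lr] c0 unfolding ky_def by simp
  have upd_c: "upd m i c b = upd m i s b" if "s \<in> Sc" "length b = m" for s b
    using Sc_props(4)[OF that(1)] upd_upd[OF Sc_props(1)[OF that(1)] i lr that(2)] by simp
  have blk_c: "blk m (upd m i c a) i = a" if "length a = m" for a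
    using blk_upd[OF lc i that i] by simp
  have upd_cc: "upd m i (upd m i c a) b = upd m i c b" if "length a = m" "length b = m" for a b
    using upd_upd[OF lc i that] .
  define u where "u = (\<lambda>a. if a \<in> A then x (upd m i c a) else 0)"
  define v where "v = (\<lambda>b. if upd m i c b \<in> Tc then y (upd m i c b) else 0)"
  have inT: "upd m i c b \<in> Tc" if aA: "a \<in> A" and bNa: "b \<in> Nb m g a" for a b
  proof -
    obtain s where s: "s \<in> Sc" and a: "a = blk m s i" using aA unfolding A_def by blast
    have b: "b \<in> pdom m g" using bNa unfolding Nb_def by simp
    have lb: "length b = m" using pdom_len[OF b] .
    have ls: "length s = n*m" using Sc_props(1)[OF s] .
    have e: "upd m i c b = upd m i s b" using upd_c[OF s lb] .
    have bN: "b \<in> Nb m g (blk m s i)" using bNa a by simp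
    have zz: "zf n m g (upd m i s b) = fl i z"
      using zf_upd_fl[OF ls i Sc_props(2)[OF s i] bN] Sc_props(3)[OF s] by simp
    have blks: "\<forall>j<n. blk m (upd m i s b) j \<in> pdom m g"
      using blk_upd[OF ls i lb] b Sc_props(2)[OF s] by simp
    have lu: "length (upd m i s b) = n*m" using len_upd[OF ls i lb] .
    have "ky m i (upd m i s b) = c"
      unfolding ky_def using upd_upd[OF ls i lb lr] Sc_props(4)[OF s] by simp
    thus ?thesis unfolding Tc_def W_def using zz blks lu e by simp
  qed
  have step1: "(\<Sum>s\<in>Sc. x s * (\<Sum>b\<in>Nb m g (blk m s i). y (upd m i s b)))
      = (\<Sum>a\<in>A. x (upd m i c a) * (\<Sum>b\<in>Nb m g a. y (upd m i c b)))"
  proof -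
    have "(\<Sum>a\<in>A. x (upd m i c a) * (\<Sum>b\<in>Nb m g a. y (upd m i c b)))
        = (\<Sum>s\<in>Sc. x (upd m i c (blk m s i)) * (\<Sum>b\<in>Nb m g (blk m s i). y (upd m i c b)))"
      unfolding A_def sum.reindex[OF injA] by simp
    also have "\<dots> = (\<Sum>s\<in>Sc. x s * (\<Sum>b\<in>Nb m g (blk m s i). y (upd m i s b)))"
    proof (rule sum.cong[OF refl])
      fix s assume s: "s \<in> Sc"
      have "(\<Sum>b\<in>Nb m g (blk m s i). y (upd m i c b)) = (\<Sum>b\<in>Nb m g (blk m s i). y (upd m i s b))"
      proof (rule sum.cong[OF refl])
        fix b assume "b \<in> Nb m g (blk m s i)"
        hence "length b = m" unfolding Nb_def using pdom_len by blast
        thus "y (upd m i c b) = y (upd m i s b)" using upd_c[OF s] by simp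
      qed
      thus "x (upd m i c (blk m s i)) * (\<Sum>b\<in>Nb m g (blk m s i). y (upd m i c b))
          = x s * (\<Sum>b\<in>Nb m g (blk m s i). y (upd m i s b))"
        using Sc_eq'[OF s] by simp
    qed
    finally show ?thesis by simp
  qed
  have step2: "(\<Sum>a\<in>A. x (upd m i c a) * (\<Sum>b\<in>Nb m g a. y (upd m i c b))) = bil m g u v"
  proof -
    have "bil m g u v = (\<Sum>a\<in>pdom m g. u a * sum v (Nb m g a))" by (rule bil_form)
    also have "\<dots> = (\<Sum>a\<in>A. u a * sum v (Nb m g a))"
      by (rule sum.mono_neutral_right[OF finite_pdom]) (auto simp: u_def A_dom)
    also have "\<dots> = (\<Sum>a\<in>A. x (upd m i c a) * (\<Sum>b\<in>Nb m g a. y (upd m i c b)))"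
    proof (rule sum.cong[OF refl])
      fix a assume a: "a \<in> A"
      have "sum v (Nb m g a) = (\<Sum>b\<in>Nb m g a. y (upd m i c b))"
        by (rule sum.cong[OF refl]) (simp add: v_def inT[OF a])
      thus "u a * sum v (Nb m g a) = x (upd m i c a) * (\<Sum>b\<in>Nb m g a. y (upd m i c b))"
        using a by (simp add: u_def)
    qed
    finally show ?thesis by simp
  qed
  have nu: "nrm (pdom m g) u = nrm Sc x"
  proof -
    have "(\<Sum>a\<in>pdom m g. (u a)\<^sup>2) = (\<Sum>a\<in>A. (u a)\<^sup>2)"
      by (rule sum.mono_neutral_right[OF finite_pdom]) (auto simp: u_def A_dom)
    also have "\<dots> = (\<Sum>a\<in>A. (x (upd m i c a))\<^sup>2)" by (simp add: u_def)
    also have "\<dots> = (\<Sum>s\<in>Sc. (x (upd m i c (blk m s i)))\<^sup>2)"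
      unfolding A_def sum.reindex[OF injA] by simp
    also have "\<dots> = (\<Sum>s\<in>Sc. (x s)\<^sup>2)"
      by (rule sum.cong[OF refl]) (simp add: Sc_eq')
    finally show ?thesis unfolding nrm_def by simp
  qed
  have nv: "nrm (pdom m g) v \<le> nrm Tc y"
  proof (rule nrm_le)
    define B where "B = {b \<in> pdom m g. upd m i c b \<in> Tc}"
    have injB: "inj_on (upd m i c) B"
    proof (rule inj_onI)
      fix b b' assume "b \<in> B" "b' \<in> B" and eq: "upd m i c b = upd m i c b'"
      hence "length b = m" "length b' = m" unfolding B_def using pdom_len by auto
      thus "b = b'" using eq blk_c by metis
    qed
    have finT: "finite Tc" unfolding Tc_def using finite_W[of n m g "fl i z"] by simp
    have "(\<Sum>b\<in>pdom m g. (v b)\<^sup>2) = (\<Sum>b\<in>B. (v b)\<^sup>2)"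
      by (rule sum.mono_neutral_right[OF finite_pdom]) (auto simp: v_def B_def)
    also have "\<dots> = (\<Sum>b\<in>B. (y (upd m i c b))\<^sup>2)" by (simp add: v_def B_def)
    also have "\<dots> = (\<Sum>t\<in>upd m i c ` B. (y t)\<^sup>2)" by (simp add: sum.reindex[OF injB])
    also have "\<dots> \<le> (\<Sum>t\<in>Tc. (y t)\<^sup>2)"
      by (rule sum_mono2[OF finT]) (auto simp: B_def)
    finally show "(\<Sum>b\<in>pdom m g. (v b)\<^sup>2) \<le> (\<Sum>t\<in>Tc. (y t)\<^sup>2)" .
  qed
  have "(\<Sum>s\<in>Sc. x s * (\<Sum>b\<in>Nb m g (blk m s i). y (upd m i s b))) = bil m g u v"
    using step1 step2 by simp
  also have "\<dots> \<le> sens_lambda m g * nrm (pdom m g) u * nrm (pdom m g) v" by (rule bil_le)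
  also have "\<dots> \<le> sens_lambda m g * nrm Sc x * nrm Tc y"
    unfolding nu by (intro mult_left_mono nv mult_nonneg_nonneg lam_nonneg nrm_nonneg)
  finally show ?thesis unfolding Sc_def Tc_def .
qed



lemma K:
  assumes i: "i < n"
  shows "(\<Sum>s\<in>W n m g z. x s * (\<Sum>b\<in>Nb m g (blk m s i). y (upd m i s b)))
     \<le> sens_lambda m g * nrm (W n m g z) x * nrm (W n m g (fl i z)) y"
proof -
  define C where "C = ky m i ` W n m g z"
  define C' where "C' = C \<union> ky m i ` W n m g (fl i z)"
  define G where "G = (\<lambda>s. x s * (\<Sum>b\<in>Nb m g (blk m s i). y (upd m i s b)))"
  define a where "a = (\<lambda>c. nrm {s\<in>W n m g z. ky m i s = c} x)"
  define b where "b = (\<lambda>c. nrm {t\<in>W n m g (fl i z). ky m i t = c} y)"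
  have fC: "finite C" unfolding C_def using finite_W by simp
  have fC': "finite C'" unfolding C'_def using fC finite_W by simp
  have "(\<Sum>s\<in>W n m g z. G s) = (\<Sum>c\<in>C. \<Sum>s\<in>{s\<in>W n m g z. ky m i s = c}. G s)"
    by (rule sum.group[symmetric, OF finite_W fC]) (simp add: C_def)
  also have "\<dots> \<le> (\<Sum>c\<in>C. sens_lambda m g * a c * b c)"
  proof (rule sum_mono)
    fix c assume "c \<in> C"
    thus "(\<Sum>s\<in>{s\<in>W n m g z. ky m i s = c}. G s) \<le> sens_lambda m g * a c * b c"
      unfolding G_def a_def b_def C_def by (rule K2[OF i])
  qed
  also have "\<dots> = sens_lambda m g * (\<Sum>c\<in>C. a c * b c)"
    by (simp add: sum_distrib_left mult.assoc)
  also have "\<dots> \<le> sens_lambda m g * (nrm C a * nrm C b)"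
    by (intro mult_left_mono CS_sum lam_nonneg)
  also have "\<dots> \<le> sens_lambda m g * (nrm (W n m g z) x * nrm (W n m g (fl i z)) y)"
  proof -
    have na: "nrm C a = nrm (W n m g z) x"
    proof -
      have "(\<Sum>c\<in>C. (a c)\<^sup>2) = (\<Sum>c\<in>C. \<Sum>s\<in>{s\<in>W n m g z. ky m i s = c}. (x s)\<^sup>2)"
        unfolding a_def nrm_sq by simp
      also have "\<dots> = (\<Sum>s\<in>W n m g z. (x s)\<^sup>2)"
        by (rule sum.group[OF finite_W fC]) (simp add: C_def)
      finally show ?thesis unfolding nrm_def by simp
    qed
    have nb: "nrm C b \<le> nrm (W n m g (fl i z)) y"
    proof (rule nrm_le)
      have "(\<Sum>c\<in>C. (b c)\<^sup>2) \<le> (\<Sum>c\<in>C'. (b c)\<^sup>2)"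
        by (rule sum_mono2[OF fC']) (auto simp: C'_def)
      also have "\<dots> = (\<Sum>c\<in>C'. \<Sum>t\<in>{t\<in>W n m g (fl i z). ky m i t = c}. (y t)\<^sup>2)"
        unfolding b_def nrm_sq by simp
      also have "\<dots> = (\<Sum>t\<in>W n m g (fl i z). (y t)\<^sup>2)"
        by (rule sum.group[OF finite_W fC']) (auto simp: C'_def)
      finally show "(\<Sum>c\<in>C. (b c)\<^sup>2) \<le> (\<Sum>t\<in>W n m g (fl i z). (y t)\<^sup>2)" .
    qed
    show ?thesis unfolding na
      by (intro mult_left_mono nb lam_nonneg nrm_nonneg)
  qed
  finally show ?thesis unfolding G_def by (simp add: mult.assoc)
qed

lemma upper:
  "bil (n*m) (pcomp n m f g) x y
     \<le> sens_lambda n f * sens_lambda m g * nrm (pdom (n*m) (pcomp n m f g)) x * nrm (pdom (n*m) (pcomp n m f g)) y"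
proof -
  define V where "V = pdom (n*m) (pcomp n m f g)"
  define H where "H = (\<lambda>s i. x s * (\<Sum>b\<in>Nb m g (blk m s i). y (upd m i s b)))"
  define X where "X = (\<lambda>z. nrm (W n m g z) x)"
  define Y where "Y = (\<lambda>z. nrm (W n m g z) y)"
  have zV: "zf n m g ` V \<subseteq> pdom n f" unfolding V_def using pdom_pcomp by blast
  have "bil (n*m) (pcomp n m f g) x y = (\<Sum>s\<in>V. \<Sum>i\<in>Ifl n f (zf n m g s). H s i)"
    unfolding bil_fg_form V_def H_def by (simp add: sum_distrib_left)
  also have "\<dots> = (\<Sum>z\<in>pdom n f. \<Sum>s\<in>{s\<in>V. zf n m g s = z}. \<Sum>i\<in>Ifl n f (zf n m g s). H s i)"
    by (rule sum.group[symmetric, OF _ finite_pdom zV]) (simp add: V_def finite_pdom)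
  also have "\<dots> = (\<Sum>z\<in>pdom n f. \<Sum>s\<in>W n m g z. \<Sum>i\<in>Ifl n f z. H s i)"
  proof (rule sum.cong[OF refl])
    fix z assume z: "z \<in> pdom n f"
    show "(\<Sum>s\<in>{s\<in>V. zf n m g s = z}. \<Sum>i\<in>Ifl n f (zf n m g s). H s i) = (\<Sum>s\<in>W n m g z. \<Sum>i\<in>Ifl n f z. H s i)"
      unfolding V_def V_W[OF z] by (rule sum.cong[OF refl]) (simp add: W_def)
  qed
  also have "\<dots> = (\<Sum>z\<in>pdom n f. \<Sum>i\<in>Ifl n f z. \<Sum>s\<in>W n m g z. H s i)"
    by (rule sum.cong[OF refl]) (rule sum.swap)
  also have "\<dots> \<le> (\<Sum>z\<in>pdom n f. \<Sum>i\<in>Ifl n f z. sens_lambda m g * X z * Y (fl i z))"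
  proof (intro sum_mono)
    fix z i assume "i \<in> Ifl n f z"
    hence i: "i < n" unfolding Ifl_def by simp
    show "(\<Sum>s\<in>W n m g z. H s i) \<le> sens_lambda m g * X z * Y (fl i z)"
      unfolding H_def X_def Y_def by (rule K[OF i])
  qed
  also have "\<dots> = sens_lambda m g * bil n f X Y"
    unfolding bil_f_form by (simp add: sum_distrib_left mult_ac)
  also have "\<dots> \<le> sens_lambda m g * (sens_lambda n f * nrm (pdom n f) X * nrm (pdom n f) Y)"
    by (intro mult_left_mono bil_le lam_nonneg)
  also have "\<dots> = sens_lambda n f * sens_lambda m g * nrm V x * nrm V y"
  proof -
    have nX: "nrm (pdom n f) (\<lambda>z. nrm (W n m g z) u) = nrm V u" for u :: "bool list \<Rightarrow> real"
    proof -
      have "(\<Sum>z\<in>pdom n f. (nrm (W n m g z) u)\<^sup>2) = (\<Sum>z\<in>pdom n f. \<Sum>s\<in>{s\<in>V. zf n m g s = z}. (u s)\<^sup>2)"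
        unfolding nrm_sq V_def by (rule sum.cong[OF refl]) (simp add: V_W)
      also have "\<dots> = (\<Sum>s\<in>V. (u s)\<^sup>2)"
        by (rule sum.group[OF _ finite_pdom zV]) (simp add: V_def finite_pdom)
      finally show ?thesis unfolding nrm_def by simp
    qed
    show ?thesis using nX[of x] nX[of y] unfolding X_def Y_def by (simp add: mult_ac)
  qed
  finally show ?thesis unfolding V_def .
qed



lemma blk_append1: assumes "length s = n*m" "j < n" shows "blk m (s @ a) j = blk m s j"
proof -
  have le: "Suc j * m \<le> n * m" using assms by (intro mult_le_mono1) simp
  have "j*m \<le> n*m" using assms(2) by (intro mult_le_mono1) simp
  hence "drop (j*m) (s @ a) = drop (j*m) s @ a" using assms(1) by simp
  moreover have "length (drop (j*m) s) \<ge> m" using le assms(1) by simp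
  ultimately show ?thesis unfolding blk_def by simp
qed

lemma blk_append2: assumes "length s = n*m" "length a = m" shows "blk m (s @ a) n = a"
  unfolding blk_def using assms by simp

definition BS :: "nat \<Rightarrow> nat \<Rightarrow> (nat \<Rightarrow> bool list set) \<Rightarrow> bool list set" where
  "BS n m S = {s. length s = n*m \<and> (\<forall>j<n. blk m s j \<in> S j)}"

lemma BS_Suc: assumes "\<And>j. S j \<subseteq> {a. length a = m}"
  shows "BS (Suc n) m S = (\<lambda>(s,a). s @ a) ` (BS n m S \<times> S n)"
proof (intro set_eqI iffI)
  fix t assume "t \<in> BS (Suc n) m S"
  hence lt: "length t = n*m + m" and bt: "\<And>j. j < Suc n \<Longrightarrow> blk m t j \<in> S j" unfolding BS_def by auto
  define s where "s = take (n*m) t"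
  define a where "a = drop (n*m) t"
  have ts: "t = s @ a" unfolding s_def a_def by simp
  have ls: "length s = n*m" unfolding s_def using lt by simp
  have la: "length a = m" unfolding a_def using lt by simp
  have "\<forall>j<n. blk m s j \<in> S j" using bt blk_append1[OF ls] ts by (metis less_SucI)
  hence "s \<in> BS n m S" unfolding BS_def using ls by simp
  moreover have "a \<in> S n" using bt[of n] blk_append2[OF ls la] ts by simp
  ultimately show "t \<in> (\<lambda>(s,a). s @ a) ` (BS n m S \<times> S n)" using ts by blast
next
  fix t assume "t \<in> (\<lambda>(s,a). s @ a) ` (BS n m S \<times> S n)"
  then obtain p where pS: "p \<in> BS n m S \<times> S n" and tp: "t = (\<lambda>(s,a). s @ a) p" by (rule imageE)
  obtain s a where pib: "p = (s,a)" by (cases p)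
  have s: "s \<in> BS n m S" and a: "a \<in> S n" using pS unfolding pib mem_Times_iff by simp_all
  have t: "t = s @ a" using tp pib by simp
  have ls: "length s = n*m" using s unfolding BS_def by simp
  have la: "length a = m" using a assms by blast
  have "blk m t j \<in> S j" if "j < Suc n" for j
  proof (cases "j = n")
    case True thus ?thesis using blk_append2[OF ls la] a t by simp
  next
    case False
    hence "j < n" using that by simp
    thus ?thesis using blk_append1[OF ls] s t unfolding BS_def by simp
  qed
  thus "t \<in> BS (Suc n) m S" unfolding BS_def using ls la t by simp
qed

lemma finite_BS: "finite (BS n m S)"
  by (rule finite_subset[OF _ finite_len[of "n*m"]]) (auto simp: BS_def)

lemma prod_sum_blocks:
  assumes "\<And>j. S j \<subseteq> {a. length a = m}"
  shows "(\<Sum>s\<in>BS n m S. \<Prod>j<n. h j (blk m s j)) = (\<Prod>j<n. \<Sum>a\<in>S j. (h j a :: real))"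
proof (induction n)
  case 0
  have "BS 0 m S = {[]}" unfolding BS_def by auto
  thus ?case by simp
next
  case (Suc n)
  have inj: "inj_on (\<lambda>(s,a). s @ a) (BS n m S \<times> S n)"
    by (rule inj_onI) (auto simp: BS_def)
  have fS: "finite (S n)"
    by (rule finite_subset[OF assms finite_len])
  have "(\<Sum>s\<in>BS (Suc n) m S. \<Prod>j<Suc n. h j (blk m s j))
      = (\<Sum>(s,a)\<in>BS n m S \<times> S n. \<Prod>j<Suc n. h j (blk m (s @ a) j))"
    unfolding BS_Suc[OF assms] sum.reindex[OF inj] by (simp add: case_prod_beta)
  also have "\<dots> = (\<Sum>(s,a)\<in>BS n m S \<times> S n. (\<Prod>j<n. h j (blk m s j)) * h n a)"
  proof (rule sum.cong[OF refl], clarify)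
    fix s a assume s: "s \<in> BS n m S" and a: "a \<in> S n"
    have ls: "length s = n*m" using s unfolding BS_def by simp
    have la: "length a = m" using a assms by blast
    have "(\<Prod>j<n. h j (blk m (s @ a) j)) = (\<Prod>j<n. h j (blk m s j))"
      by (rule prod.cong[OF refl]) (simp add: blk_append1[OF ls])
    thus "(\<Prod>j<Suc n. h j (blk m (s @ a) j)) = (\<Prod>j<n. h j (blk m s j)) * h n a"
      using blk_append2[OF ls la] by simp
  qed
  also have "\<dots> = (\<Sum>s\<in>BS n m S. \<Sum>a\<in>S n. (\<Prod>j<n. h j (blk m s j)) * h n a)"
    by (rule sum.cartesian_product[symmetric])
  also have "\<dots> = (\<Sum>s\<in>BS n m S. \<Prod>j<n. h j (blk m s j)) * (\<Sum>a\<in>S n. h n a)"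
    by (simp add: sum_product)
  also have "\<dots> = (\<Prod>j<Suc n. \<Sum>a\<in>S j. h j a)" using Suc.IH by simp
  finally show ?case .
qed



definition Ac :: "nat \<Rightarrow> pbf \<Rightarrow> bool \<Rightarrow> bool list set" where
  "Ac m g c = {a \<in> pdom m g. g a = Some c}"

definition ten :: "nat \<Rightarrow> nat \<Rightarrow> (bool list \<Rightarrow> real) \<Rightarrow> bool list \<Rightarrow> real" where
  "ten n m w s = (\<Prod>j<n. w (blk m s j))"

definition bet :: "nat \<Rightarrow> pbf \<Rightarrow> (bool list \<Rightarrow> real) \<Rightarrow> bool \<Rightarrow> real" where
  "bet m g w c = (\<Sum>a\<in>Ac m g c. w a * (\<Sum>b\<in>Nb m g a. w b))"

lemma Ac_len: "Ac m g c \<subseteq> {a. length a = m}"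
  unfolding Ac_def pdom_def by auto

lemma finite_Ac: "finite (Ac m g c)"
  unfolding Ac_def using finite_pdom by simp

lemma W_BS: assumes "length z = n" shows "W n m g z = BS n m (\<lambda>j. Ac m g (z ! j))"
proof (intro set_eqI iffI)
  fix s assume "s \<in> W n m g z"
  hence ls: "length s = n*m" and b: "\<And>j. j<n \<Longrightarrow> blk m s j \<in> pdom m g" and zs: "zf n m g s = z"
    unfolding W_def by auto
  have "blk m s j \<in> Ac m g (z ! j)" if j: "j < n" for j
  proof -
    obtain c where c: "g (blk m s j) = Some c" using b[OF j] unfolding pdom_def by auto
    have "z ! j = c" using zs nth_zf[OF j, of m g s] c by simp
    thus ?thesis unfolding Ac_def using b[OF j] c by simp
  qed
  thus "s \<in> BS n m (\<lambda>j. Ac m g (z ! j))" unfolding BS_def using ls by simp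
next
  fix s assume "s \<in> BS n m (\<lambda>j. Ac m g (z ! j))"
  hence ls: "length s = n*m" and b: "\<And>j. j<n \<Longrightarrow> blk m s j \<in> Ac m g (z ! j)"
    unfolding BS_def by auto
  have zs: "zf n m g s = z"
  proof (rule nth_equalityI)
    show "length (zf n m g s) = length z" using assms by simp
    fix j assume "j < length (zf n m g s)"
    hence j: "j < n" by simp
    show "zf n m g s ! j = z ! j" using b[OF j] nth_zf[OF j] unfolding Ac_def by simp
  qed
  have "\<forall>j<n. blk m s j \<in> pdom m g" using b unfolding Ac_def by blast
  thus "s \<in> W n m g z" unfolding W_def using ls zs by simp
qed

lemma Nb_Ac: assumes "a \<in> Ac m g c" "b \<in> Nb m g a" shows "b \<in> Ac m g (\<not> c)"
proof -
  have a: "a \<in> pdom m g" and ga: "g a = Some c" using assms(1) unfolding Ac_def by auto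
  have b: "b \<in> pdom m g" and e: "g a \<noteq> g b" using assms(2) unfolding Nb_def sens_edge_def by auto
  have "the (g b) = (\<not> c)" using some_bool_neq[OF a b e] ga by simp
  moreover obtain d where "g b = Some d" using b unfolding pdom_def by auto
  ultimately show ?thesis unfolding Ac_def using b by simp
qed

lemma bet_E: "bet m g w c = (\<Sum>a\<in>pdom m g. \<Sum>b\<in>pdom m g.
    if g a = Some c \<and> sens_edge m g a b then w a * w b else 0)"
proof -
  have "bet m g w c = (\<Sum>a\<in>pdom m g. if g a = Some c then w a * (\<Sum>b\<in>Nb m g a. w b) else 0)"
    unfolding bet_def Ac_def by (simp add: sum.inter_filter[OF finite_pdom])
  also have "\<dots> = (\<Sum>a\<in>pdom m g. \<Sum>b\<in>pdom m g. if g a = Some c \<and> sens_edge m g a b then w a * w b else 0)"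
  proof (rule sum.cong[OF refl])
    fix a
    show "(if g a = Some c then w a * (\<Sum>b\<in>Nb m g a. w b) else 0) =
      (\<Sum>b\<in>pdom m g. if g a = Some c \<and> sens_edge m g a b then w a * w b else 0)"
      unfolding Nb_def sum_distrib_left by (simp add: sum.inter_filter[OF finite_pdom])
  qed
  finally show ?thesis .
qed

lemma bet_sym: "bet m g w c = bet m g w (\<not> c)"
proof -
  have "bet m g w c = (\<Sum>b\<in>pdom m g. \<Sum>a\<in>pdom m g.
    if g a = Some c \<and> sens_edge m g a b then w a * w b else 0)"
    unfolding bet_E by (rule sum.swap)
  also have "\<dots> = (\<Sum>b\<in>pdom m g. \<Sum>a\<in>pdom m g.
    if g b = Some (\<not> c) \<and> sens_edge m g b a then w b * w a else 0)"
  proof (intro sum.cong refl)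
    fix a b assume a: "a \<in> pdom m g" and b: "b \<in> pdom m g"
    have "(g a = Some c \<and> sens_edge m g a b) = (g b = Some (\<not> c) \<and> sens_edge m g b a)"
    proof
      assume H: "g a = Some c \<and> sens_edge m g a b"
      hence "b \<in> Ac m g (\<not> c)" using Nb_Ac[of a m g c b] a b unfolding Ac_def Nb_def by simp
      hence "g b = Some (\<not> c)" unfolding Ac_def by simp
      moreover have "sens_edge m g b a" using H sens_edge_sym[of m g a b] by simp
      ultimately show "g b = Some (\<not> c) \<and> sens_edge m g b a" by simp
    next
      assume H: "g b = Some (\<not> c) \<and> sens_edge m g b a"
      hence "a \<in> Ac m g (\<not> \<not> c)" using Nb_Ac[of b m g "\<not> c" a] a b unfolding Ac_def Nb_def by simp
      hence "g a = Some c" unfolding Ac_def by simp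
      moreover have "sens_edge m g a b" using H sens_edge_sym[of m g a b] by simp
      ultimately show "g a = Some c \<and> sens_edge m g a b" by simp
    qed
    thus "(if g a = Some c \<and> sens_edge m g a b then w a * w b else 0) =
      (if g b = Some (\<not> c) \<and> sens_edge m g b a then w b * w a else 0)" by (simp add: mult.commute)
  qed
  also have "\<dots> = bet m g w (\<not> c)" unfolding bet_E ..
  finally show ?thesis .
qed

lemma bet_const: "bet m g w c = bet m g w False"
  by (cases c) (use bet_sym[of m g w True] in auto)



lemma ten_upd_sum:
  assumes ls: "length s = n*m" and i: "i < n"
  shows "ten n m w s * (\<Sum>b\<in>Nb m g (blk m s i). ten n m w (upd m i s b))
    = (\<Prod>j<n. (if j = i then w (blk m s j) * (\<Sum>b\<in>Nb m g (blk m s j). w b) else (w (blk m s j))\<^sup>2))"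
proof -
  define P where "P = (\<Prod>j\<in>{..<n} - {i}. w (blk m s j))"
  have iin: "i \<in> {..<n}" using i by simp
  have tu: "ten n m w (upd m i s b) = w b * P" if b: "b \<in> Nb m g (blk m s i)" for b
  proof -
    have lb: "length b = m" using b pdom_len unfolding Nb_def by blast
    have "ten n m w (upd m i s b) = (\<Prod>j<n. w (if j = i then b else blk m s j))"
      unfolding ten_def by (rule prod.cong[OF refl]) (simp add: blk_upd[OF ls i lb])
    also have "\<dots> = w b * (\<Prod>j\<in>{..<n} - {i}. w (if j = i then b else blk m s j))"
      by (subst prod.remove[OF _ iin]) simp_all
    also have "(\<Prod>j\<in>{..<n} - {i}. w (if j = i then b else blk m s j)) = P"
      unfolding P_def by (rule prod.cong[OF refl]) simp
    finally show ?thesis .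
  qed
  have ts: "ten n m w s = w (blk m s i) * P"
    unfolding ten_def P_def by (subst prod.remove[OF _ iin]) simp_all
  have "(\<Sum>b\<in>Nb m g (blk m s i). ten n m w (upd m i s b)) = (\<Sum>b\<in>Nb m g (blk m s i). w b) * P"
    by (simp add: tu sum_distrib_right)
  hence "ten n m w s * (\<Sum>b\<in>Nb m g (blk m s i). ten n m w (upd m i s b))
      = (w (blk m s i) * (\<Sum>b\<in>Nb m g (blk m s i). w b)) * P\<^sup>2"
    using ts by (simp add: power2_eq_square mult_ac)
  also have "P\<^sup>2 = (\<Prod>j\<in>{..<n} - {i}. (w (blk m s j))\<^sup>2)"
    unfolding P_def by (rule prod_power_distrib)
  also have "(\<Prod>j\<in>{..<n} - {i}. (w (blk m s j))\<^sup>2)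
      = (\<Prod>j\<in>{..<n} - {i}. (if j = i then w (blk m s j) * (\<Sum>b\<in>Nb m g (blk m s j). w b) else (w (blk m s j))\<^sup>2))"
    by (rule prod.cong[OF refl]) simp
  also have "(w (blk m s i) * (\<Sum>b\<in>Nb m g (blk m s i). w b)) * \<dots>
      = (\<Prod>j<n. (if j = i then w (blk m s j) * (\<Sum>b\<in>Nb m g (blk m s j). w b) else (w (blk m s j))\<^sup>2))"
    using prod.remove[OF _ iin, of "\<lambda>j. if j = i then w (blk m s j) * (\<Sum>b\<in>Nb m g (blk m s j). w b) else (w (blk m s j))\<^sup>2"]
    by simp
  finally show ?thesis .
qed

lemma sq_one: assumes "\<forall>c. nrm (Ac m g c) w = 1" shows "(\<Sum>a\<in>Ac m g c. (w a)\<^sup>2) = 1"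
  using nrm_sq[of "Ac m g c" w] assms by simp

lemma inner_W:
  assumes w1: "\<forall>c. nrm (Ac m g c) w = 1" and lz: "length z = n" and i: "i < n"
  shows "(\<Sum>s\<in>W n m g z. ten n m w s * (\<Sum>b\<in>Nb m g (blk m s i). ten n m w (upd m i s b))) = bet m g w False"
proof -
  define h where "h = (\<lambda>j a. if j = i then w a * (\<Sum>b\<in>Nb m g a. w b) else (w a)\<^sup>2)"
  have iin: "i \<in> {..<n}" using i by simp
  have "(\<Sum>s\<in>W n m g z. ten n m w s * (\<Sum>b\<in>Nb m g (blk m s i). ten n m w (upd m i s b)))
      = (\<Sum>s\<in>BS n m (\<lambda>j. Ac m g (z ! j)). \<Prod>j<n. h j (blk m s j))"
    unfolding W_BS[OF lz]
  proof (rule sum.cong[OF refl])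
    fix s assume "s \<in> BS n m (\<lambda>j. Ac m g (z ! j))"
    hence ls: "length s = n*m" unfolding BS_def by simp
    show "ten n m w s * (\<Sum>b\<in>Nb m g (blk m s i). ten n m w (upd m i s b)) = (\<Prod>j<n. h j (blk m s j))"
      unfolding ten_upd_sum[OF ls i] h_def by (rule prod.cong[OF refl]) simp
  qed
  also have "\<dots> = (\<Prod>j<n. \<Sum>a\<in>Ac m g (z ! j). h j a)"
    by (rule prod_sum_blocks) (rule Ac_len)
  also have "\<dots> = (\<Sum>a\<in>Ac m g (z ! i). h i a) * (\<Prod>j\<in>{..<n} - {i}. \<Sum>a\<in>Ac m g (z ! j). h j a)"
    by (subst prod.remove[OF _ iin]) simp_all
  also have "(\<Prod>j\<in>{..<n} - {i}. \<Sum>a\<in>Ac m g (z ! j). h j a) = 1"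
  proof (rule prod.neutral, rule ballI)
    fix j assume "j \<in> {..<n} - {i}"
    hence "j \<noteq> i" by simp
    thus "(\<Sum>a\<in>Ac m g (z ! j). h j a) = 1" unfolding h_def using sq_one[OF w1] by simp
  qed
  also have "(\<Sum>a\<in>Ac m g (z ! i). h i a) = bet m g w (z ! i)"
    unfolding h_def bet_def by simp
  finally show ?thesis using bet_const by simp
qed

lemma tensor_norm:
  assumes w1: "\<forall>c. nrm (Ac m g c) w = 1"
  shows "nrm (pdom (n*m) (pcomp n m f g)) (\<lambda>s. p (zf n m g s) * ten n m w s) = nrm (pdom n f) p"
proof -
  define V where "V = pdom (n*m) (pcomp n m f g)"
  have zV: "zf n m g ` V \<subseteq> pdom n f" unfolding V_def using pdom_pcomp by blast
  have "(\<Sum>s\<in>V. (p (zf n m g s) * ten n m w s)\<^sup>2)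
      = (\<Sum>z\<in>pdom n f. \<Sum>s\<in>{s\<in>V. zf n m g s = z}. (p (zf n m g s) * ten n m w s)\<^sup>2)"
    by (rule sum.group[symmetric, OF _ finite_pdom zV]) (simp add: V_def finite_pdom)
  also have "\<dots> = (\<Sum>z\<in>pdom n f. (p z)\<^sup>2)"
  proof (rule sum.cong[OF refl])
    fix z assume z: "z \<in> pdom n f"
    have lz: "length z = n" using pdom_len[OF z] .
    have "(\<Sum>s\<in>{s\<in>V. zf n m g s = z}. (p (zf n m g s) * ten n m w s)\<^sup>2)
       = (\<Sum>s\<in>W n m g z. (p z)\<^sup>2 * (\<Prod>j<n. (w (blk m s j))\<^sup>2))"
      unfolding V_def V_W[OF z]
      by (rule sum.cong[OF refl]) (simp add: W_def ten_def power_mult_distrib prod_power_distrib)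
    also have "\<dots> = (p z)\<^sup>2 * (\<Sum>s\<in>BS n m (\<lambda>j. Ac m g (z ! j)). \<Prod>j<n. (w (blk m s j))\<^sup>2)"
      unfolding W_BS[OF lz] sum_distrib_left ..
    also have "\<dots> = (p z)\<^sup>2 * (\<Prod>j<n. \<Sum>a\<in>Ac m g (z ! j). (w a)\<^sup>2)"
      by (subst prod_sum_blocks[OF Ac_len]) (rule refl)
    also have "\<dots> = (p z)\<^sup>2" using sq_one[OF w1] by simp
    finally show "(\<Sum>s\<in>{s\<in>V. zf n m g s = z}. (p (zf n m g s) * ten n m w s)\<^sup>2) = (p z)\<^sup>2" .
  qed
  finally show ?thesis unfolding nrm_def V_def by simp
qed

lemma tensor_bil:
  assumes w1: "\<forall>c. nrm (Ac m g c) w = 1"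
  shows "bil (n*m) (pcomp n m f g) (\<lambda>s. p (zf n m g s) * ten n m w s) (\<lambda>s. q (zf n m g s) * ten n m w s)
    = bet m g w False * bil n f p q"
proof -
  define V where "V = pdom (n*m) (pcomp n m f g)"
  define T where "T = (\<lambda>s i. \<Sum>b\<in>Nb m g (blk m s i). q (zf n m g (upd m i s b)) * ten n m w (upd m i s b))"
  have zV: "zf n m g ` V \<subseteq> pdom n f" unfolding V_def using pdom_pcomp by blast
  have "bil (n*m) (pcomp n m f g) (\<lambda>s. p (zf n m g s) * ten n m w s) (\<lambda>s. q (zf n m g s) * ten n m w s)
     = (\<Sum>s\<in>V. p (zf n m g s) * ten n m w s * (\<Sum>i\<in>Ifl n f (zf n m g s). T s i))"
    unfolding bil_fg_form V_def T_def ..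
  also have "\<dots> = (\<Sum>z\<in>pdom n f. \<Sum>s\<in>{s\<in>V. zf n m g s = z}. p (zf n m g s) * ten n m w s * (\<Sum>i\<in>Ifl n f (zf n m g s). T s i))"
    by (rule sum.group[symmetric, OF _ finite_pdom zV]) (simp add: V_def finite_pdom)
  also have "\<dots> = (\<Sum>z\<in>pdom n f. p z * (\<Sum>i\<in>Ifl n f z. q (fl i z) * bet m g w False))"
  proof (rule sum.cong[OF refl])
    fix z assume z: "z \<in> pdom n f"
    have lz: "length z = n" using pdom_len[OF z] .
    have "(\<Sum>s\<in>{s\<in>V. zf n m g s = z}. p (zf n m g s) * ten n m w s * (\<Sum>i\<in>Ifl n f (zf n m g s). T s i))
      = (\<Sum>s\<in>W n m g z. \<Sum>i\<in>Ifl n f z. p z * q (fl i z) *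
           (ten n m w s * (\<Sum>b\<in>Nb m g (blk m s i). ten n m w (upd m i s b))))"
      unfolding V_def V_W[OF z]
    proof (rule sum.cong[OF refl])
      fix s assume s: "s \<in> W n m g z"
      have ls: "length s = n*m" and bs: "\<And>j. j<n \<Longrightarrow> blk m s j \<in> pdom m g" and zs: "zf n m g s = z"
        using s unfolding W_def by auto
      have Tsi: "T s i = q (fl i z) * (\<Sum>b\<in>Nb m g (blk m s i). ten n m w (upd m i s b))" if "i \<in> Ifl n f z" for i
      proof -
        have i: "i < n" using that unfolding Ifl_def by simp
        show ?thesis unfolding T_def sum_distrib_left
          by (rule sum.cong[OF refl]) (simp add: zf_upd_fl[OF ls i bs[OF i]] zs)
      qed
      define SS where "SS = (\<lambda>i. \<Sum>b\<in>Nb m g (blk m s i). ten n m w (upd m i s b))"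
      have "(\<Sum>i\<in>Ifl n f z. T s i) = (\<Sum>i\<in>Ifl n f z. q (fl i z) * SS i)"
        unfolding SS_def by (rule sum.cong[OF refl]) (rule Tsi)
      hence "p (zf n m g s) * ten n m w s * (\<Sum>i\<in>Ifl n f (zf n m g s). T s i)
          = p z * ten n m w s * (\<Sum>i\<in>Ifl n f z. q (fl i z) * SS i)" using zs by simp
      also have "\<dots> = (\<Sum>i\<in>Ifl n f z. p z * ten n m w s * (q (fl i z) * SS i))"
        by (rule sum_distrib_left)
      also have "\<dots> = (\<Sum>i\<in>Ifl n f z. p z * q (fl i z) * (ten n m w s * SS i))"
        by (rule sum.cong[OF refl]) (simp only: mult_ac)
      finally show "p (zf n m g s) * ten n m w s * (\<Sum>i\<in>Ifl n f (zf n m g s). T s i)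
        = (\<Sum>i\<in>Ifl n f z. p z * q (fl i z) * (ten n m w s * (\<Sum>b\<in>Nb m g (blk m s i). ten n m w (upd m i s b))))"
        unfolding SS_def .
    qed
    also have "\<dots> = (\<Sum>i\<in>Ifl n f z. \<Sum>s\<in>W n m g z. p z * q (fl i z) *
           (ten n m w s * (\<Sum>b\<in>Nb m g (blk m s i). ten n m w (upd m i s b))))"
      by (rule sum.swap)
    also have "\<dots> = (\<Sum>i\<in>Ifl n f z. p z * q (fl i z) * bet m g w False)"
    proof (rule sum.cong[OF refl])
      fix i assume "i \<in> Ifl n f z"
      hence i: "i < n" unfolding Ifl_def by simp
      show "(\<Sum>s\<in>W n m g z. p z * q (fl i z) * (ten n m w s * (\<Sum>b\<in>Nb m g (blk m s i). ten n m w (upd m i s b))))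
          = p z * q (fl i z) * bet m g w False"
        unfolding sum_distrib_left[symmetric] inner_W[OF w1 lz i] ..
    qed
    also have "\<dots> = p z * (\<Sum>i\<in>Ifl n f z. q (fl i z) * bet m g w False)"
      by (simp add: sum_distrib_left mult_ac)
    finally show "(\<Sum>s\<in>{s\<in>V. zf n m g s = z}. p (zf n m g s) * ten n m w s * (\<Sum>i\<in>Ifl n f (zf n m g s). T s i))
      = p z * (\<Sum>i\<in>Ifl n f z. q (fl i z) * bet m g w False)" .
  qed
  also have "\<dots> = bet m g w False * bil n f p q"
    unfolding bil_f_form by (simp add: sum_distrib_left sum_distrib_right mult_ac)
  finally show ?thesis .
qed



lemma lam_bet:
  assumes w1: "\<forall>c. nrm (Ac m g c) w = 1"
  shows "sens_lambda n f * bet m g w False \<le> sens_lambda (n*m) (pcomp n m f g)"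
proof (cases "bet m g w False > 0")
  case False
  hence "sens_lambda n f * bet m g w False \<le> 0"
    using lam_nonneg[of n f] by (simp add: mult_nonneg_nonpos)
  thus ?thesis using lam_nonneg[of "n*m" "pcomp n m f g"] by linarith
next
  case True
  define L where "L = sens_lambda (n*m) (pcomp n m f g)"
  define \<beta> where "\<beta> = bet m g w False"
  have bpos: "\<beta> > 0" using True unfolding \<beta>_def .
  have "sens_lambda n f \<le> L / \<beta>"
  proof (rule lam_le)
    show "0 \<le> L / \<beta>" using bpos lam_nonneg unfolding L_def by simp
  next
    fix p q :: "bool list \<Rightarrow> real"
    have "\<beta> * bil n f p q = bil (n*m) (pcomp n m f g) (\<lambda>s. p (zf n m g s) * ten n m w s) (\<lambda>s. q (zf n m g s) * ten n m w s)"
      unfolding \<beta>_def by (rule tensor_bil[OF w1, symmetric])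
    also have "\<dots> \<le> L * nrm (pdom (n*m) (pcomp n m f g)) (\<lambda>s. p (zf n m g s) * ten n m w s)
         * nrm (pdom (n*m) (pcomp n m f g)) (\<lambda>s. q (zf n m g s) * ten n m w s)"
      unfolding L_def by (rule bil_le)
    also have "\<dots> = L * nrm (pdom n f) p * nrm (pdom n f) q"
      unfolding tensor_norm[OF w1] ..
    finally have "\<beta> * bil n f p q \<le> L * nrm (pdom n f) p * nrm (pdom n f) q" .
    hence "bil n f p q \<le> (L * nrm (pdom n f) p * nrm (pdom n f) q) / \<beta>"
      using bpos by (simp add: pos_le_divide_eq mult.commute)
    thus "bil n f p q \<le> L / \<beta> * nrm (pdom n f) p * nrm (pdom n f) q" by simp
  qed
  hence "sens_lambda n f * \<beta> \<le> L" using bpos by (simp add: pos_le_divide_eq)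
  thus ?thesis unfolding L_def \<beta>_def .
qed

lemma gam_bound:
  "sens_lambda n f * (\<Sum>a\<in>Ac m g c. u a * (\<Sum>b\<in>Nb m g a. v b))
     \<le> sens_lambda (n*m) (pcomp n m f g) * nrm (Ac m g c) u * nrm (Ac m g (\<not> c)) v"
proof -
  define L where "L = sens_lambda (n*m) (pcomp n m f g)"
  define \<gamma> where "\<gamma> = (\<Sum>a\<in>Ac m g c. u a * (\<Sum>b\<in>Nb m g a. v b))"
  define \<alpha> where "\<alpha> = nrm (Ac m g c) u"
  define \<delta> where "\<delta> = nrm (Ac m g (\<not> c)) v"
  have L0: "0 \<le> L" unfolding L_def by (rule lam_nonneg)
  have a0: "0 \<le> \<alpha>" unfolding \<alpha>_def by (rule nrm_nonneg)
  have d0: "0 \<le> \<delta>" unfolding \<delta>_def by (rule nrm_nonneg)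
  have "sens_lambda n f * \<gamma> \<le> L * \<alpha> * \<delta>"
  proof (cases "\<alpha> = 0 \<or> \<delta> = 0")
    case True
    have "\<gamma> = 0"
    proof (cases "\<alpha> = 0")
      case True
      hence "u a = 0" if "a \<in> Ac m g c" for a using nrm_zero[OF finite_Ac _ that] unfolding \<alpha>_def by blast
      thus ?thesis unfolding \<gamma>_def by simp
    next
      case False
      hence d: "\<delta> = 0" using True by simp
      have "v b = 0" if "a \<in> Ac m g c" "b \<in> Nb m g a" for a b
        using nrm_zero[OF finite_Ac _ Nb_Ac[OF that]] d unfolding \<delta>_def by blast
      thus ?thesis unfolding \<gamma>_def by simp
    qed
    thus ?thesis using L0 a0 d0 by simp
  next
    case False
    hence apos: "\<alpha> > 0" and dpos: "\<delta> > 0" using a0 d0 by auto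
    define w where "w = (\<lambda>a. if g a = Some c then u a / \<alpha> else v a / \<delta>)"
    have w1: "\<forall>c'. nrm (Ac m g c') w = 1"
    proof
      fix c'
      show "nrm (Ac m g c') w = 1"
      proof (cases "c' = c")
        case True
        have "(\<Sum>a\<in>Ac m g c'. (w a)\<^sup>2) = (\<Sum>a\<in>Ac m g c. (u a)\<^sup>2) / \<alpha>\<^sup>2"
          unfolding True w_def sum_divide_distrib
          by (rule sum.cong[OF refl]) (simp add: Ac_def power_divide)
        also have "\<dots> = 1" using apos unfolding \<alpha>_def nrm_sq[symmetric] by simp
        finally show ?thesis unfolding nrm_def by simp
      next
        case False
        hence c': "c' = (\<not> c)" by simp
        have "(\<Sum>a\<in>Ac m g c'. (w a)\<^sup>2) = (\<Sum>a\<in>Ac m g (\<not> c). (v a)\<^sup>2) / \<delta>\<^sup>2"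
          unfolding c' w_def sum_divide_distrib
          by (rule sum.cong[OF refl]) (auto simp: Ac_def power_divide)
        also have "\<dots> = 1" using dpos unfolding \<delta>_def nrm_sq[symmetric] by simp
        finally show ?thesis unfolding nrm_def by simp
      qed
    qed
    have "bet m g w False = bet m g w c" by (rule bet_const[symmetric])
    also have "\<dots> = (\<Sum>a\<in>Ac m g c. (u a / \<alpha>) * (\<Sum>b\<in>Nb m g a. v b / \<delta>))"
      unfolding bet_def
    proof (rule sum.cong[OF refl])
      fix a assume a: "a \<in> Ac m g c"
      have "(\<Sum>b\<in>Nb m g a. w b) = (\<Sum>b\<in>Nb m g a. v b / \<delta>)"
      proof (rule sum.cong[OF refl])
        fix b assume "b \<in> Nb m g a"
        hence "b \<in> Ac m g (\<not> c)" by (rule Nb_Ac[OF a])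
        hence "g b \<noteq> Some c" unfolding Ac_def by auto
        thus "w b = v b / \<delta>" unfolding w_def by simp
      qed
      moreover have "w a = u a / \<alpha>" using a unfolding w_def Ac_def by simp
      ultimately show "w a * (\<Sum>b\<in>Nb m g a. w b) = u a / \<alpha> * (\<Sum>b\<in>Nb m g a. v b / \<delta>)" by simp
    qed
    also have "\<dots> = (\<Sum>a\<in>Ac m g c. u a * (\<Sum>b\<in>Nb m g a. v b) / (\<alpha> * \<delta>))"
      by (rule sum.cong[OF refl]) (simp add: sum_divide_distrib[symmetric])
    also have "\<dots> = \<gamma> / (\<alpha> * \<delta>)"
      unfolding \<gamma>_def by (rule sum_divide_distrib[symmetric])
    finally have "bet m g w False = \<gamma> / (\<alpha> * \<delta>)" .
    hence "sens_lambda n f * (\<gamma> / (\<alpha> * \<delta>)) \<le> L"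
      using lam_bet[OF w1, of n f] unfolding L_def by simp
    hence "sens_lambda n f * \<gamma> / (\<alpha> * \<delta>) \<le> L" by simp
    thus ?thesis using apos dpos by (simp add: pos_divide_le_eq mult_ac)
  qed
  thus ?thesis unfolding L_def \<gamma>_def \<alpha>_def \<delta>_def .
qed

lemma cs2: fixes a b c d :: real shows "a*b + c*d \<le> sqrt (a\<^sup>2 + c\<^sup>2) * sqrt (b\<^sup>2 + d\<^sup>2)"
proof -
  have e: "(a\<^sup>2 + c\<^sup>2) * (b\<^sup>2 + d\<^sup>2) - (a*b + c*d)\<^sup>2 = (a*d - c*b)\<^sup>2"
    by (simp add: power2_eq_square algebra_simps)
  have "0 \<le> (a*d - c*b)\<^sup>2" by simp
  hence "(a*b + c*d)\<^sup>2 \<le> (a\<^sup>2 + c\<^sup>2) * (b\<^sup>2 + d\<^sup>2)" using e by linarith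
  hence "sqrt ((a*b + c*d)\<^sup>2) \<le> sqrt ((a\<^sup>2 + c\<^sup>2) * (b\<^sup>2 + d\<^sup>2))" by (rule real_sqrt_le_mono)
  hence "\<bar>a*b + c*d\<bar> \<le> sqrt (a\<^sup>2 + c\<^sup>2) * sqrt (b\<^sup>2 + d\<^sup>2)" by (simp add: real_sqrt_mult)
  thus ?thesis by linarith
qed

lemma pdom_split: "pdom m g = Ac m g True \<union> Ac m g False"
  unfolding Ac_def pdom_def by auto

lemma lower_g:
  "sens_lambda n f * bil m g u v
     \<le> sens_lambda (n*m) (pcomp n m f g) * nrm (pdom m g) u * nrm (pdom m g) v"
proof -
  define L where "L = sens_lambda (n*m) (pcomp n m f g)"
  define G where "G = (\<lambda>a. u a * (\<Sum>b\<in>Nb m g a. v b))"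
  have disj: "Ac m g True \<inter> Ac m g False = {}" unfolding Ac_def by auto
  have "bil m g u v = (\<Sum>a\<in>Ac m g True. G a) + (\<Sum>a\<in>Ac m g False. G a)"
    unfolding bil_form pdom_split G_def by (rule sum.union_disjoint[OF finite_Ac finite_Ac disj])
  hence "sens_lambda n f * bil m g u v = sens_lambda n f * (\<Sum>a\<in>Ac m g True. G a) + sens_lambda n f * (\<Sum>a\<in>Ac m g False. G a)"
    by (simp add: distrib_left)
  also have "\<dots> \<le> L * nrm (Ac m g True) u * nrm (Ac m g False) v + L * nrm (Ac m g False) u * nrm (Ac m g True) v"
  proof (rule add_mono)
    show "sens_lambda n f * (\<Sum>a\<in>Ac m g True. G a) \<le> L * nrm (Ac m g True) u * nrm (Ac m g False) v"
      using gam_bound[where c=True and u=u and v=v and n=n and f=f and m=m and g=g] unfolding L_def G_def by simp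
    show "sens_lambda n f * (\<Sum>a\<in>Ac m g False. G a) \<le> L * nrm (Ac m g False) u * nrm (Ac m g True) v"
      using gam_bound[where c=False and u=u and v=v and n=n and f=f and m=m and g=g] unfolding L_def G_def by simp
  qed
  also have "\<dots> = L * (nrm (Ac m g True) u * nrm (Ac m g False) v + nrm (Ac m g False) u * nrm (Ac m g True) v)"
    by (simp add: algebra_simps)
  also have "\<dots> \<le> L * (nrm (pdom m g) u * nrm (pdom m g) v)"
  proof (rule mult_left_mono)
    show "0 \<le> L" unfolding L_def by (rule lam_nonneg)
    have nu: "nrm (pdom m g) x = sqrt ((nrm (Ac m g True) x)\<^sup>2 + (nrm (Ac m g False) x)\<^sup>2)" for x
      unfolding nrm_sq unfolding nrm_def pdom_split
      by (simp add: sum.union_disjoint[OF finite_Ac finite_Ac disj])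
    show "nrm (Ac m g True) u * nrm (Ac m g False) v + nrm (Ac m g False) u * nrm (Ac m g True) v
        \<le> nrm (pdom m g) u * nrm (pdom m g) v"
      unfolding nu[of u] nu[of v] using cs2[of "nrm (Ac m g True) u" "nrm (Ac m g False) v" "nrm (Ac m g False) u" "nrm (Ac m g True) v"]
      by (simp add: add.commute)
  qed
  finally show ?thesis unfolding L_def by (simp add: mult.assoc)
qed

theorem theoremA2:
  fixes n m :: nat and f g :: pbf
  shows "sens_lambda (n * m) (pcomp n m f g) = sens_lambda n f * sens_lambda m g"
proof (rule antisym)
  show "sens_lambda (n * m) (pcomp n m f g) \<le> sens_lambda n f * sens_lambda m g"
    by (rule lam_le) (simp_all add: lam_nonneg upper)
next
  define L where "L = sens_lambda (n*m) (pcomp n m f g)"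
  show "sens_lambda n f * sens_lambda m g \<le> sens_lambda (n * m) (pcomp n m f g)"
  proof (cases "sens_lambda n f = 0")
    case True thus ?thesis using lam_nonneg by simp
  next
    case False
    hence fpos: "sens_lambda n f > 0" using lam_nonneg[of n f] by simp
    have "sens_lambda m g \<le> L / sens_lambda n f"
    proof (rule lam_le)
      show "0 \<le> L / sens_lambda n f" using fpos lam_nonneg unfolding L_def by simp
    next
      fix u v
      have "sens_lambda n f * bil m g u v \<le> L * nrm (pdom m g) u * nrm (pdom m g) v"
        unfolding L_def by (rule lower_g)
      thus "bil m g u v \<le> L / sens_lambda n f * nrm (pdom m g) u * nrm (pdom m g) v"
        using fpos by (simp add: pos_le_divide_eq mult.commute mult.left_commute)
    qed
    thus ?thesis using fpos unfolding L_def by (simp add: pos_le_divide_eq mult.commute)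
  qed
qed


end
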